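(* Consider the primal–dual SDP pair and the one-step ADMM iteration described in the context, under the standing assumptions there ($\mathcal A$ surjective, nonempty KKT set), and suppose $Z^{(k)}\to Z_\star=X_\star-\sigma S_\star$, where $(X_\star,y_\star,S_\star)$ is a KKT point with $\operatorname{rank}X_\star+\operatorname{rank}S_\star=n$. Let $\mathcal Z_\star$ be the set of fixed points of the one-step ADMM map. Then for any $\rho_0\in(\|\mathcal M-\Pi_{\mathrm{Fix}(\mathcal M)}\|_{\mathrm{op}},1)$ there exists $\bar k\in\mathbb N$ such that $\operatorname{dist}(Z^{(k)},\mathcal Z_\star)$ converges R-linearly for $k\ge\bar k$; i.e., there exist $\alpha>0$ and $\rho\in(0,1)$ with $\operatorname{dist}(Z^{(k)},\mathcal Z_\star)\le\alpha\rho^k$ for all integers $k\ge\bar k$.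
   Context: $\mathbb S^n$ denotes the real symmetric $n\times n$ matrices with inner product $\langle X,Y\rangle=\operatorname{tr}(XY)$ and Frobenius norm $\|\cdot\|_F$; $\mathbb S^n_+$ is the positive semidefinite cone and $\Pi_{\mathbb S^n_+}$ the Frobenius-orthogonal projection onto it; $\operatorname{dist}(Z,\mathcal S)=\inf_{W\in\mathcal S}\|Z-W\|_F$. Data $C,A_1,\dots,A_m\in\mathbb S^n$, $b\in\mathbb R^m$; $\mathcal A X=(\langle A_1,X\rangle,\dots,\langle A_m,X\rangle)$, $\mathcal A^*y=\sum_i y_iA_i$. Primal: minimize $\langle C,X\rangle$ s.t. $\mathcal AX=b$, $X\in\mathbb S^n_+$; dual: maximize $b^\top y$ s.t. $\mathcal A^*y+S=C$, $S\in\mathbb S^n_+$. A KKT point is $(X,y,S)$ with $\mathcal AX=b$, $\mathcal A^*y+S=C$, $\langle X,S\rangle=0$, $X,S\in\mathbb S^n_+$. Standing assumptions: $\mathcal A$ is surjective and the KKT set is nonempty. Let $\mathcal P=\mathcal A^*(\mathcal A\mathcal A^* )^{-1}\mathcal A$ (orthogonal projection onto the range of $\mathcal A^*$) and $\mathcal P^\perp=\mathrm{Id}-\mathcal P$. For fixed $\sigma>0$ and $Z^{(0)}\in\mathbb S^n$, one-step ADMM is $Z^{(k+1)}=\mathcal P(-2\Pi_{\mathbb S^n_+}(Z^{(k)})+Z^{(k)})+\Pi_{\mathbb S^n_+}(Z^{(k)})+\mathcal A^*(\mathcal A\mathcal A^* )^{-1}b+\sigma\mathcal PC-\sigma C$.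 Since $X_\star,S_\star\succeq0$, $\langle X_\star,S_\star\rangle=0$ and strict complementarity holds, there is an orthogonal $Q_\star$ with $Z_\star=Q_\star\operatorname{diag}(\lambda_1,\dots,\lambda_n)Q_\star^\top$, $\lambda_1\ge\dots\ge\lambda_r>0>\lambda_{r+1}\ge\dots\ge\lambda_n$, $r=\operatorname{rank}X_\star$, $X_\star=Q_\star\operatorname{diag}(\lambda_1,\dots,\lambda_r,0,\dots,0)Q_\star^\top$. Define $\Theta\in\mathbb R^{(n-r)\times r}$ by $\Theta_{ij}=\lambda_j/(\lambda_j-\lambda_{i+r})$ and $\Omega=\begin{pmatrix}E_r&\Theta^\top\\ \Theta&0\end{pmatrix}\in\mathbb S^n$ ($E_r$ the all-ones $r\times r$ matrix). Let $\circ$ be the Hadamard product, $\mathcal D(H)=Q_\star(\Omega\circ(Q_\star^\top HQ_\star))Q_\star^\top$, $\mathcal D^\perp(H)=H-\mathcal D(H)$, and $\mathcal M(H)=\mathcal P\mathcal D^\perp(H)+\mathcal P^\perp\mathcal D(H)$, a linear map on $\mathbb S^n$. $\mathrm{Fix}(\mathcal M)=\{H:\mathcal M(H)=H\}$, $\Pi_{\mathrm{Fix}(\mathcal M)}$ is the orthogonal projection onto this subspace, and $\|\cdot\|_{\mathrm{op}}$ is the operator norm induced by $\|\cdot\|_F$. *)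

theory Defs
  imports "HOL-Analysis.Analysis"
begin

text \<open>Real n x n matrices are modelled as real^'n^'n (index type 'n finite, n = CARD('n)).
  The Euclidean norm/inner product on this type is exactly the Frobenius norm/inner product.\<close>

definition sym_mats :: "(real^'n^'n) set" where
  "sym_mats = {X. transpose X = X}"

definition frob :: "real^'n^'n \<Rightarrow> real^'n^'n \<Rightarrow> real" where
  "frob X Y = trace (X ** Y)"

definition psd_cone :: "(real^'n^'n) set" where
  "psd_cone = {X. transpose X = X \<and> (\<forall>v. 0 \<le> v \<bullet> (X *v v))}"

definition proj_psd :: "real^'n^'n \<Rightarrow> real^'n^'n" where
  "proj_psd Z = closest_point psd_cone Z"

definition opA :: "('m::finite \<Rightarrow> real^'n^'n) \<Rightarrow> real^'n^'n \<Rightarrow> real^'m" where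
  "opA A X = (\<chi> i. frob (A i) X)"

definition opAadj :: "('m::finite \<Rightarrow> real^'n^'n) \<Rightarrow> real^'m \<Rightarrow> real^'n^'n" where
  "opAadj A y = (\<Sum>i\<in>UNIV. (y $ i) *\<^sub>R A i)"

text \<open>Matrix of \<A>\<A>^* (Gram matrix), so (\<A>\<A>^*) y = gramA A *v y.\<close>
definition gramA :: "('m::finite \<Rightarrow> real^'n^'n) \<Rightarrow> real^'m^'m" where
  "gramA A = (\<chi> i j. frob (A i) (A j))"

definition projP :: "('m::finite \<Rightarrow> real^'n^'n) \<Rightarrow> real^'n^'n \<Rightarrow> real^'n^'n" where
  "projP A X = opAadj A (matrix_inv (gramA A) *v opA A X)"

definition admm_step :: "('m::finite \<Rightarrow> real^'n^'n) \<Rightarrow> real^'m \<Rightarrow> real^'n^'n \<Rightarrow> real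
     \<Rightarrow> real^'n^'n \<Rightarrow> real^'n^'n" where
  "admm_step A b C \<sigma> Z =
     projP A (- 2 *\<^sub>R proj_psd Z + Z) + proj_psd Z
     + opAadj A (matrix_inv (gramA A) *v b) + \<sigma> *\<^sub>R projP A C - \<sigma> *\<^sub>R C"

definition is_KKT :: "('m::finite \<Rightarrow> real^'n^'n) \<Rightarrow> real^'m \<Rightarrow> real^'n^'n
     \<Rightarrow> real^'n^'n \<Rightarrow> real^'m \<Rightarrow> real^'n^'n \<Rightarrow> bool" where
  "is_KKT A b C X y S \<longleftrightarrow> opA A X = b \<and> opAadj A y + S = C \<and> frob X S = 0
     \<and> X \<in> psd_cone \<and> S \<in> psd_cone"

definition diag_mat :: "real^'n \<Rightarrow> real^'n^'n" where
  "diag_mat l = (\<chi> i j. if i = j then l $ i else 0)"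

definition hadamard :: "real^'n^'n \<Rightarrow> real^'n^'n \<Rightarrow> real^'n^'n" where
  "hadamard M N = (\<chi> i j. M $ i $ j * N $ i $ j)"

text \<open>The matrix \<Omega>, written index-wise: indices with positive eigenvalue form the
  first block (size r), those with negative eigenvalue the second block.\<close>
definition Omega :: "real^'n \<Rightarrow> real^'n^'n" where
  "Omega l = (\<chi> i j.
     if 0 < l $ i \<and> 0 < l $ j then 1
     else if l $ i < 0 \<and> 0 < l $ j then l $ j / (l $ j - l $ i)
     else if 0 < l $ i \<and> l $ j < 0 then l $ i / (l $ i - l $ j)
     else 0)"

definition opD :: "real^'n^'n \<Rightarrow> real^'n \<Rightarrow> real^'n^'n \<Rightarrow> real^'n^'n" where
  "opD Q l H = Q ** hadamard (Omega l) (transpose Q ** H ** Q) ** transpose Q"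

definition opM :: "('m::finite \<Rightarrow> real^'n^'n) \<Rightarrow> real^'n^'n \<Rightarrow> real^'n \<Rightarrow> real^'n^'n \<Rightarrow> real^'n^'n" where
  "opM A Q l H = projP A (H - opD Q l H) + (opD Q l H - projP A (opD Q l H))"

definition fix_sym :: "(real^'n^'n \<Rightarrow> real^'n^'n) \<Rightarrow> (real^'n^'n) set" where
  "fix_sym L = {H \<in> sym_mats. L H = H}"

definition sym_opnorm :: "(real^'n^'n \<Rightarrow> real^'n^'n) \<Rightarrow> real" where
  "sym_opnorm L = (SUP H \<in> {H \<in> sym_mats. H \<noteq> 0}. norm (L H) / norm H)"

end

theory Submission
  imports Defs
begin


lemma inner_mat: "(X::real^'n^'n) \<bullet> Y = (\<Sum>i\<in>UNIV. \<Sum>j\<in>UNIV. X$i$j * Y$i$j)"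
  by (simp add: inner_vec_def)

lemma inner_mat_trace: "(X::real^'n^'n) \<bullet> Y = trace (transpose X ** Y)"
  unfolding trace_def inner_vec_def matrix_matrix_mult_def transpose_def
  by (simp, rule sum.swap)

lemma sym_iff: "transpose (X::real^'n^'n) = X \<longleftrightarrow> (\<forall>i j. X$i$j = X$j$i)"
  by (auto simp: transpose_def vec_eq_iff)

lemma frob_sym: "transpose (Y::real^'n^'n) = Y \<Longrightarrow> frob X Y = X \<bullet> Y"
  unfolding frob_def inner_mat trace_def matrix_matrix_mult_def sym_iff
  by simp

definition qf :: "real^'n^'n \<Rightarrow> real^'n \<Rightarrow> real" where
  "qf X v = (\<Sum>i\<in>UNIV. \<Sum>j\<in>UNIV. v$i * X$i$j * v$j)"

definition bil :: "real^'n^'n \<Rightarrow> real^'n \<Rightarrow> real^'n \<Rightarrow> real" where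
  "bil X v w = (\<Sum>i\<in>UNIV. \<Sum>j\<in>UNIV. v$i * X$i$j * w$j)"

lemma qf_eq: "v \<bullet> (X *v v) = qf X v"
  by (simp add: qf_def inner_vec_def matrix_vector_mult_def sum_distrib_left mult.assoc)

lemma bil_eq: "w \<bullet> (X *v v) = bil X w v"
  by (simp add: bil_def inner_vec_def matrix_vector_mult_def sum_distrib_left mult.assoc)

lemma psd_iff: "X \<in> psd_cone \<longleftrightarrow> transpose X = X \<and> (\<forall>v. 0 \<le> qf X v)"
  by (simp add: psd_cone_def qf_eq)

lemma bil_sym: "transpose X = X \<Longrightarrow> bil X v w = bil X w v"
  unfolding bil_def sym_iff
  apply (subst sum.swap)
  by (simp add: mult_ac)

lemma qf_bil: "qf X v = bil X v v"
  by (simp add: qf_def bil_def)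

lemma bil_add_right: "bil X v (a + b) = bil X v a + bil X v b"
  by (simp add: bil_def algebra_simps sum.distrib)
lemma bil_add_left: "bil X (a + b) v = bil X a v + bil X b v"
  by (simp add: bil_def algebra_simps sum.distrib)
lemma bil_scale_right: "bil X v (t *\<^sub>R a) = t * bil X v a"
  by (simp add: bil_def algebra_simps sum_distrib_left)
lemma bil_scale_left: "bil X (t *\<^sub>R a) v = t * bil X a v"
  by (simp add: bil_def algebra_simps sum_distrib_left)

lemma qf_expand: "transpose X = X \<Longrightarrow>
   qf X (a + t *\<^sub>R b) = qf X a + 2 * t * bil X a b + t\<^sup>2 * qf X b"
  unfolding qf_bil
  by (simp add: bil_add_right bil_add_left bil_scale_right bil_scale_left bil_sym[of X b a]
       power2_eq_square algebra_simps)

lemma bil_axis: "bil X (axis i 1) (axis j 1) = X$i$j"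
  unfolding bil_def axis_def by (simp add: if_distrib[of "\<lambda>x. x * _"] if_distrib[of "\<lambda>x. _ * x"] cong: if_cong)

lemma bil_axis_right: "bil X v (axis j 1) = (\<Sum>i\<in>UNIV. v$i * X$i$j)"
  unfolding bil_def axis_def by (simp add: if_distrib[of "\<lambda>x. x * _"] if_distrib[of "\<lambda>x. _ * x"] cong: if_cong)

lemma psd_diag_nonneg: "X \<in> psd_cone \<Longrightarrow> 0 \<le> X$i$i"
  using psd_iff[of X] qf_bil[of X "axis i 1"] bil_axis[of X i i] by metis

lemma quad_nonneg_lin_zero:
  fixes c q :: real
  assumes "\<forall>t. 0 \<le> c + 2 * t * b + t\<^sup>2 * q" "c = 0 \<or> q = 0" "0 \<le> q" "0 \<le> c"
  shows "b = 0"
proof (rule ccontr)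
  assume b: "b \<noteq> 0"
  show False
  proof (cases "q = 0")
    case True
    have "0 \<le> c + 2 * (-(c+1)/(2*b)) * b" using assms(1)[rule_format, of "-(c+1)/(2*b)"] True by simp
    also have "\<dots> = -1" using b by (simp add: field_simps)
    finally show False by simp
  next
    case False
    then have c0: "c = 0" using assms(2) by simp
    have qp: "q > 0" using False assms(3) by simp
    have "0 \<le> c + 2 * (-b/q) * b + (-b/q)\<^sup>2 * q" using assms(1) by blast
    also have "\<dots> = - b\<^sup>2 / q" using qp c0 by (simp add: field_simps power2_eq_square)
    finally have "b\<^sup>2 / q \<le> 0" by simp
    moreover have "b\<^sup>2 / q > 0" using b qp by simp
    ultimately show False by simp
  qed
qed

lemma psd_diag_zero:
  assumes X: "X \<in> psd_cone" and z: "X$i$i = 0"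
  shows "X$i$j = 0"
proof -
  have s: "transpose X = X" and q: "\<And>v. 0 \<le> qf X v" using X psd_iff by auto
  have "\<forall>t. 0 \<le> X$j$j + 2 * t * X$j$i + t\<^sup>2 * X$i$i"
    using q[of "axis j 1 + _ *\<^sub>R axis i 1"] qf_expand[OF s, of "axis j 1" _ "axis i 1"]
    by (simp add: qf_bil bil_axis)
  then have "X$j$i = 0"
    by (intro quad_nonneg_lin_zero[where c="X$j$j" and q="X$i$i"]) (auto simp: z psd_diag_nonneg[OF X])
  then show ?thesis using s sym_iff by metis
qed

lemma psd_qf_zero:
  assumes X: "X \<in> psd_cone" and z: "qf X v = 0"
  shows "X *v v = 0"
proof -
  have s: "transpose X = X" and q: "\<And>v. 0 \<le> qf X v" using X psd_iff by auto
  let ?w = "X *v v"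
  have "\<forall>t. 0 \<le> qf X v + 2 * t * bil X v ?w + t\<^sup>2 * qf X ?w"
    using q qf_expand[OF s, of v _ ?w] by metis
  then have "bil X v ?w = 0"
    by (intro quad_nonneg_lin_zero[where c="qf X v" and q="qf X ?w"]) (auto simp: z q)
  then have "?w \<bullet> ?w = 0" using bil_eq[of ?w X v] bil_sym[OF s] by simp
  then show ?thesis by simp
qed



definition outer :: "real^'n \<Rightarrow> real^'n^'n" where
  "outer v = (\<chi> i j. v$i * v$j)"

lemma qf_outer: "qf (outer c) v = (c \<bullet> v)\<^sup>2"
  by (simp add: qf_def outer_def inner_vec_def power2_eq_square sum_product mult_ac)

lemma qf_diff: "qf (X - Y) v = qf X v - qf Y v"
  by (simp add: qf_def algebra_simps sum_subtractf)

lemma qf_scale: "qf (t *\<^sub>R X) v = t * qf X v"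
  by (simp add: qf_def algebra_simps sum_distrib_left)

lemma outer_scale: "outer (t *\<^sub>R v) = (t * t) *\<^sub>R outer v"
  by (simp add: outer_def vec_eq_iff)

lemma psd_decomp_aux:
  assumes "finite S"
  shows "\<forall>X. X \<in> psd_cone \<longrightarrow> (\<forall>i j. i \<notin> S \<longrightarrow> X$i$j = 0) \<longrightarrow> (\<exists>f. X = (\<Sum>k\<in>S. outer (f k)))"
  using assms
proof (induction S rule: finite_induct)
  case empty
  then show ?case by (auto simp: vec_eq_iff)
next
  case (insert a S)
  show ?case
  proof (intro allI impI)
    fix X :: "real^'a^'a"
    assume X: "X \<in> psd_cone" and supp: "\<forall>i j. i \<notin> insert a S \<longrightarrow> X$i$j = 0"
    have s: "transpose X = X" and q: "\<And>v. 0 \<le> qf X v" using X psd_iff by auto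
    have sy: "\<And>i j. X$i$j = X$j$i" using s sym_iff by metis
    show "\<exists>f. X = (\<Sum>k\<in>insert a S. outer (f k))"
    proof (cases "X$a$a = 0")
      case True
      then have "\<forall>i j. i \<notin> S \<longrightarrow> X$i$j = 0"
      proof (intro allI impI)
        fix i j assume "i \<notin> S"
        then show "X$i$j = 0" using supp psd_diag_zero[OF X True, of j] by (cases "i = a") auto
      qed
      then obtain f where f: "X = (\<Sum>k\<in>S. outer (f k))" using insert.IH X by blast
      have e: "(\<Sum>k\<in>S. outer ((f(a:=0)) k)) = (\<Sum>k\<in>S. outer (f k))"
        using insert.hyps by (intro sum.cong) auto
      have o: "outer 0 = 0" by (simp add: outer_def vec_eq_iff)
      have "X = (\<Sum>k\<in>insert a S. outer ((f(a := 0)) k))"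
        using insert.hyps f e o by simp
      then show ?thesis by blast
    next
      case False
      define x where "x = X$a$a"
      have xp: "x > 0" using False psd_diag_nonneg[OF X, of a] x_def by simp
      define c where "c = X$a"
      define X' where "X' = X - (1/x) *\<^sub>R outer c"
      have cS: "c$i = X$i$a" for i using sy c_def by simp
      have X's: "transpose X' = X'"
        unfolding X'_def sym_iff by (simp add: outer_def sy mult.commute)
      have X'q: "0 \<le> qf X' v" for v
      proof -
        have b: "bil X v (axis a 1) = c \<bullet> v"
          by (simp add: bil_axis_right inner_vec_def cS mult.commute)
        have "0 \<le> qf X (v + (- ((c \<bullet> v)/x)) *\<^sub>R axis a 1)" by (rule q)
        also have "\<dots> = qf X v - (c \<bullet> v)\<^sup>2 / x"
          using qf_expand[OF s, of v "- ((c \<bullet> v)/x)" "axis a 1"] b xp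
          by (simp add: qf_bil bil_axis x_def[symmetric] field_simps power2_eq_square)
        also have "\<dots> = qf X' v"
          by (simp add: X'_def qf_diff qf_scale qf_outer)
        finally show ?thesis .
      qed
      have X'psd: "X' \<in> psd_cone" using X's X'q psd_iff by blast
      have X'supp: "\<forall>i j. i \<notin> S \<longrightarrow> X'$i$j = 0"
      proof (intro allI impI)
        fix i j assume i: "i \<notin> S"
        show "X'$i$j = 0"
        proof (cases "i = a")
          case True
          then show ?thesis using xp by (simp add: X'_def outer_def c_def x_def)
        next
          case False
          then have "X$i$j = 0" "c$i = 0" using supp i cS by auto
          then show ?thesis by (simp add: X'_def outer_def)
        qed
      qed
      obtain f where f: "X' = (\<Sum>k\<in>S. outer (f k))" using insert.IH X'psd X'supp by blast
      define g where "g = f(a := (1 / sqrt x) *\<^sub>R c)"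
      have ga: "outer (g a) = (1/x) *\<^sub>R outer c"
        using xp by (simp add: g_def outer_scale real_sqrt_mult[symmetric])
      have e: "(\<Sum>k\<in>S. outer (g k)) = (\<Sum>k\<in>S. outer (f k))"
        using insert.hyps by (intro sum.cong) (auto simp: g_def)
      have "(\<Sum>k\<in>insert a S. outer (g k)) = outer (g a) + (\<Sum>k\<in>S. outer (f k))"
        using insert.hyps e by simp
      also have "\<dots> = X" using ga f X'_def by (metis add.commute diff_add_cancel)
      finally show ?thesis by metis
    qed
  qed
qed

lemma psd_decomp:
  fixes X :: "real^'n^'n"
  assumes "X \<in> psd_cone"
  obtains f :: "'n \<Rightarrow> real^'n" where "X = (\<Sum>k\<in>UNIV. outer (f k))"
proof -
  have "\<exists>f::'n \<Rightarrow> real^'n. X = (\<Sum>k\<in>UNIV. outer (f k))"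
    using psd_decomp_aux[of "UNIV"] assms by auto
  then obtain f :: "'n \<Rightarrow> real^'n" where "X = (\<Sum>k\<in>UNIV. outer (f k))" by blast
  then show ?thesis by (rule that)
qed

lemma inner_outer: "outer v \<bullet> Y = qf Y v"
  by (simp add: inner_mat outer_def qf_def mult_ac)

lemma psd_inner_nonneg:
  fixes X Y :: "real^'n^'n"
  assumes "X \<in> psd_cone" "Y \<in> psd_cone"
  shows "0 \<le> X \<bullet> Y"
proof -
  obtain f :: "'n \<Rightarrow> real^'n" where f: "X = (\<Sum>k\<in>UNIV. outer (f k))" by (rule psd_decomp[OF assms(1)])
  have "X \<bullet> Y = (\<Sum>k\<in>UNIV. qf Y (f k))" by (simp add: f inner_sum_left inner_outer)
  also have "\<dots> \<ge> 0" using assms(2) psd_iff by (auto intro: sum_nonneg)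
  finally show ?thesis .
qed

lemma psd_inner_zero:
  fixes X Y :: "real^'n^'n"
  assumes "X \<in> psd_cone" "Y \<in> psd_cone" "X \<bullet> Y = 0"
  shows "Y ** X = 0" "X ** Y = 0"
proof -
  obtain f :: "'n \<Rightarrow> real^'n" where f: "X = (\<Sum>k\<in>UNIV. outer (f k))" by (rule psd_decomp[OF assms(1)])
  have "X \<bullet> Y = (\<Sum>k\<in>UNIV. qf Y (f k))" by (simp add: f inner_sum_left inner_outer)
  then have "\<forall>k\<in>UNIV. qf Y (f k) = 0"
    using assms psd_iff by (subst sum_nonneg_eq_0_iff[symmetric]) auto
  then have z: "\<And>k. Y *v f k = 0" using psd_qf_zero assms(2) by blast
  have Xe: "X$l$j = (\<Sum>k\<in>UNIV. f k $ l * f k $ j)" for l j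
    by (simp add: f outer_def sum_component)
  have "(Y ** X)$i$j = 0" for i j
  proof -
    have "(Y ** X)$i$j = (\<Sum>l\<in>UNIV. Y$i$l * (\<Sum>k\<in>UNIV. f k $ l * f k $ j))"
      by (simp add: matrix_matrix_mult_def Xe)
    also have "\<dots> = (\<Sum>l\<in>UNIV. \<Sum>k\<in>UNIV. Y$i$l * (f k $ l * f k $ j))"
      by (simp add: sum_distrib_left)
    also have "\<dots> = (\<Sum>k\<in>UNIV. \<Sum>l\<in>UNIV. Y$i$l * (f k $ l * f k $ j))"
      by (rule sum.swap)
    also have "\<dots> = (\<Sum>k\<in>UNIV. (\<Sum>l\<in>UNIV. Y$i$l * f k $ l) * f k $ j)"
      by (simp add: sum_distrib_right sum_distrib_left mult_ac)
    also have "\<dots> = (\<Sum>k\<in>UNIV. (Y *v f k)$i * f k $ j)"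
      by (simp add: matrix_vector_mult_def)
    also have "\<dots> = 0" by (simp add: z)
    finally show ?thesis .
  qed
  then show YX: "Y ** X = 0" by (simp add: vec_eq_iff)
  have "X ** Y = transpose (Y ** X)"
  proof -
    have "transpose X = X" "transpose Y = Y" using assms(1,2) psd_iff by auto
    then show ?thesis by (simp add: matrix_transpose_mul)
  qed
  then show "X ** Y = 0" using YX by (simp add: transpose_def vec_eq_iff)
qed

lemma norm_outer: "norm (outer v) = v \<bullet> v"
proof -
  have "outer v \<bullet> outer v = (v \<bullet> v)\<^sup>2"
    by (simp add: inner_outer qf_outer)
  then show ?thesis by (simp add: norm_eq_sqrt_inner)
qed

lemma psd_norm_le_trace:
  fixes X :: "real^'n^'n"
  assumes "X \<in> psd_cone"
  shows "norm X \<le> trace X"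
proof -
  obtain f :: "'n \<Rightarrow> real^'n" where f: "X = (\<Sum>k\<in>UNIV. outer (f k))" by (rule psd_decomp[OF assms(1)])
  have "norm X \<le> (\<Sum>k\<in>UNIV. norm (outer (f k)))" unfolding f by (rule norm_sum)
  also have "\<dots> = (\<Sum>k\<in>UNIV. f k \<bullet> f k)" by (simp add: norm_outer)
  also have "\<dots> = (\<Sum>k\<in>UNIV. \<Sum>i\<in>UNIV. f k $ i * f k $ i)"
    by (simp add: inner_vec_def)
  also have "\<dots> = (\<Sum>i\<in>UNIV. \<Sum>k\<in>UNIV. f k $ i * f k $ i)"
    by (rule sum.swap)
  also have "\<dots> = trace X"
    by (simp add: f trace_def outer_def sum_component)
  finally show ?thesis .
qed



lemma mm_add_l: "((A::real^'n^'n) + B) ** C = A ** C + B ** C"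
  by (simp add: matrix_matrix_mult_def vec_eq_iff algebra_simps sum.distrib)
lemma mm_add_r: "(C::real^'n^'n) ** (A + B) = C ** A + C ** B"
  by (simp add: matrix_matrix_mult_def vec_eq_iff algebra_simps sum.distrib)
lemma mm_diff_l: "((A::real^'n^'n) - B) ** C = A ** C - B ** C"
  by (simp add: matrix_matrix_mult_def vec_eq_iff algebra_simps sum_subtractf)
lemma mm_diff_r: "(C::real^'n^'n) ** (A - B) = C ** A - C ** B"
  by (simp add: matrix_matrix_mult_def vec_eq_iff algebra_simps sum_subtractf)
lemma mm_scale_l: "(t *\<^sub>R (A::real^'n^'n)) ** C = t *\<^sub>R (A ** C)"
  by (simp add: matrix_matrix_mult_def vec_eq_iff algebra_simps sum_distrib_left)
lemma mm_scale_r: "(C::real^'n^'n) ** (t *\<^sub>R A) = t *\<^sub>R (C ** A)"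
  by (simp add: matrix_matrix_mult_def vec_eq_iff algebra_simps sum_distrib_left)
lemma mm_uminus_l: "(- (A::real^'n^'n)) ** C = - (A ** C)"
  by (simp add: matrix_matrix_mult_def vec_eq_iff sum_negf)
lemma mm_uminus_r: "(C::real^'n^'n) ** (- A) = - (C ** A)"
  by (simp add: matrix_matrix_mult_def vec_eq_iff sum_negf)

lemma qf_add: "qf (X + Y) v = qf X v + qf Y v"
  by (simp add: qf_def algebra_simps sum.distrib)

lemma psd_add: "X \<in> psd_cone \<Longrightarrow> Y \<in> psd_cone \<Longrightarrow> X + Y \<in> psd_cone"
  by (simp add: psd_iff qf_add transpose_def vec_eq_iff)

lemma psd_scale: "X \<in> psd_cone \<Longrightarrow> 0 \<le> t \<Longrightarrow> t *\<^sub>R X \<in> psd_cone"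
  by (simp add: psd_iff qf_scale transpose_scalar)

lemma psd_zero: "0 \<in> psd_cone"
  by (simp add: psd_iff qf_def transpose_def vec_eq_iff)

lemma psd_outer: "outer v \<in> psd_cone"
  unfolding psd_iff qf_outer by (simp add: sym_iff outer_def mult.commute)

lemma psd_convex: "convex psd_cone"
  unfolding convex_def by (auto intro: psd_add psd_scale)

lemma psd_closed: "closed (psd_cone :: (real^'n^'n) set)"
proof -
  have e: "psd_cone = (\<Inter>i. \<Inter>j. {X::real^'n^'n. X$i$j - X$j$i = 0}) \<inter> (\<Inter>v. {X. 0 \<le> qf X v})"
    by (auto simp: psd_iff sym_iff)
  show ?thesis unfolding e qf_def
    by (intro closed_Int closed_INT ballI closed_Collect_le closed_Collect_eq continuous_intros)
qed

lemma psd_sym: "X \<in> psd_cone \<Longrightarrow> transpose X = X"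
  by (simp add: psd_iff)

lemma proj_char:
  fixes Z :: "real^'n^'n"
  assumes Zs: "transpose Z = Z"
  shows "proj_psd Z \<in> psd_cone" "proj_psd Z - Z \<in> psd_cone" "proj_psd Z \<bullet> (proj_psd Z - Z) = 0"
proof -
  let ?X = "proj_psd Z"
  have ne: "psd_cone \<noteq> {}" using psd_zero by blast
  show X: "?X \<in> psd_cone" unfolding proj_psd_def using closest_point_in_set[OF psd_closed ne] .
  have d: "\<And>V. V \<in> psd_cone \<Longrightarrow> (Z - ?X) \<bullet> (V - ?X) \<le> 0"
    unfolding proj_psd_def by (rule closest_point_dot[OF psd_convex psd_closed])
  have "(Z - ?X) \<bullet> (0 - ?X) \<le> 0" using d[OF psd_zero] .
  moreover have "(Z - ?X) \<bullet> (2 *\<^sub>R ?X - ?X) \<le> 0" using d[OF psd_scale[OF X, of 2]] by simp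
  ultimately have "(Z - ?X) \<bullet> ?X = 0" by (simp add: inner_diff_right algebra_simps)
  then show "?X \<bullet> (?X - Z) = 0" by (simp add: inner_diff_right inner_diff_left inner_commute)
  have "qf (?X - Z) v \<ge> 0" for v
  proof -
    have "(Z - ?X) \<bullet> ((?X + outer v) - ?X) \<le> 0" using d[OF psd_add[OF X psd_outer]] .
    then have "(Z - ?X) \<bullet> outer v \<le> 0" by simp
    then have "qf (Z - ?X) v \<le> 0" by (simp add: inner_commute[of _ "outer v"] inner_outer)
    then show ?thesis by (simp add: qf_diff)
  qed
  moreover have "transpose (?X - Z) = ?X - Z" using psd_sym[OF X] Zs
    by (simp add: transpose_def vec_eq_iff)
  ultimately show "?X - Z \<in> psd_cone" by (simp add: psd_iff)
qed

lemma proj_unique: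
  fixes Z X :: "real^'n^'n"
  assumes X: "X \<in> psd_cone" and Y: "X - Z \<in> psd_cone" and c: "X \<bullet> (X - Z) = 0"
  shows "proj_psd Z = X"
proof -
  have "\<forall>V\<in>psd_cone. dist Z X \<le> dist Z V"
  proof
    fix V :: "real^'n^'n" assume V: "V \<in> psd_cone"
    have "0 \<le> (X - Z) \<bullet> V" using psd_inner_nonneg[OF Y V] .
    then have i: "0 \<le> (Z - X) \<bullet> (X - V)" using c
      by (simp add: inner_diff_right inner_diff_left inner_commute algebra_simps)
    have "(Z - V) \<bullet> (Z - V) = (Z - X) \<bullet> (Z - X) + 2 * ((Z - X) \<bullet> (X - V)) + (X - V) \<bullet> (X - V)"
      by (simp add: inner_diff_right inner_diff_left inner_commute algebra_simps)
    then have "(Z - X) \<bullet> (Z - X) \<le> (Z - V) \<bullet> (Z - V)" using i inner_ge_zero[of "X - V"] by linarith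
    then show "dist Z X \<le> dist Z V" by (simp add: dist_norm norm_le)
  qed
  then show ?thesis unfolding proj_psd_def
    using closest_point_unique[OF psd_convex psd_closed X] by metis
qed

lemma proj_lip: "norm (proj_psd Z - proj_psd W) \<le> norm (Z - W)"
  unfolding proj_psd_def
  using closest_point_lipschitz[OF psd_convex psd_closed, of Z W] psd_zero
  by (auto simp: dist_norm)

definition cj :: "real^'n^'n \<Rightarrow> real^'n^'n \<Rightarrow> real^'n^'n" where
  "cj Q X = transpose Q ** X ** Q"

lemma cj_add: "cj Q (X + Y) = cj Q X + cj Q Y"
  by (simp add: cj_def mm_add_l mm_add_r)
lemma cj_diff: "cj Q (X - Y) = cj Q X - cj Q Y"
  by (simp add: cj_def mm_diff_l mm_diff_r)
lemma cj_scale: "cj Q (t *\<^sub>R X) = t *\<^sub>R cj Q X"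
  by (simp add: cj_def mm_scale_l mm_scale_r)
lemma cj_uminus: "cj Q (- X) = - cj Q X"
  by (simp add: cj_def mm_uminus_l mm_uminus_r)
lemma cj_zero: "cj Q 0 = 0"
  by (simp add: cj_def)
lemma cj_transpose: "cj Q (transpose X) = transpose (cj Q X)"
  by (simp add: cj_def matrix_transpose_mul matrix_mul_assoc)

lemma orth_QQt: "orthogonal_matrix Q \<Longrightarrow> Q ** transpose Q = mat 1"
  by (simp add: orthogonal_matrix_def)
lemma orth_QtQ: "orthogonal_matrix Q \<Longrightarrow> transpose Q ** Q = mat 1"
  by (simp add: orthogonal_matrix_def)

lemma cj_mult: "orthogonal_matrix Q \<Longrightarrow> cj Q (X ** Y) = cj Q X ** cj Q Y"
proof -
  assume Q: "orthogonal_matrix Q"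
  have "cj Q X ** cj Q Y = transpose Q ** X ** (Q ** transpose Q) ** Y ** Q"
    by (simp add: cj_def matrix_mul_assoc)
  also have "\<dots> = cj Q (X ** Y)" by (simp add: orth_QQt[OF Q] cj_def matrix_mul_assoc)
  finally show ?thesis by simp
qed

lemma cj_inv: "orthogonal_matrix Q \<Longrightarrow> cj (transpose Q) (cj Q X) = X"
  by (simp add: cj_def matrix_mul_assoc orth_QQt)
     (simp add: matrix_mul_assoc[symmetric] orth_QQt)

lemma cj_inv2: "orthogonal_matrix Q \<Longrightarrow> cj Q (cj (transpose Q) X) = X"
  using cj_inv[of "transpose Q" X] by simp

lemma cj_inner: "orthogonal_matrix Q \<Longrightarrow> cj Q X \<bullet> cj Q Y = X \<bullet> Y"
proof -
  assume Q: "orthogonal_matrix Q"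
  have "cj Q X \<bullet> cj Q Y = trace (transpose Q ** (transpose X ** Y ** Q))"
    by (simp add: inner_mat_trace cj_def matrix_transpose_mul matrix_mul_assoc)
       (simp add: matrix_mul_assoc[symmetric] orth_QQt[OF Q])
  also have "\<dots> = trace ((transpose X ** Y ** Q) ** transpose Q)" by (rule trace_mul_sym)
  also have "\<dots> = trace (transpose X ** Y)"
    by (simp add: matrix_mul_assoc[symmetric] orth_QQt[OF Q])
  finally show ?thesis by (simp add: inner_mat_trace)
qed

lemma cj_norm: "orthogonal_matrix Q \<Longrightarrow> norm (cj Q X) = norm X"
  by (simp add: norm_eq_sqrt_inner cj_inner)

lemma qf_cj: "qf (cj Q X) v = qf X (Q *v v)"
proof -
  have "qf (cj Q X) v = v \<bullet> (transpose Q *v (X *v (Q *v v)))"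
    by (simp add: qf_eq[symmetric] cj_def matrix_vector_mul_assoc matrix_mul_assoc)
  also have "\<dots> = (Q *v v) \<bullet> (X *v (Q *v v))"
    by (simp add: inner_commute[of v] dot_lmul_matrix inner_commute[of "X *v _"])
  finally show ?thesis by (simp add: qf_eq)
qed

lemma cj_psd: "X \<in> psd_cone \<Longrightarrow> cj Q X \<in> psd_cone"
  by (simp add: psd_iff qf_cj) (metis cj_transpose)

lemma cj_psd_iff: "orthogonal_matrix Q \<Longrightarrow> cj Q X \<in> psd_cone \<longleftrightarrow> X \<in> psd_cone"
  using cj_psd[of X Q] cj_psd[of "cj Q X" "transpose Q"] cj_inv[of Q X] by auto

lemma cj_sym_iff: "orthogonal_matrix Q \<Longrightarrow> transpose (cj Q X) = cj Q X \<longleftrightarrow> transpose X = X"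
  by (metis cj_inv cj_transpose)



lemma norm_sq_mat: "(norm (X::real^'n^'n))\<^sup>2 = (\<Sum>i\<in>UNIV. \<Sum>j\<in>UNIV. (X$i$j)\<^sup>2)"
  unfolding power2_norm_eq_inner inner_mat by (simp only: power2_eq_square)

lemma norm_sq_rows: "(norm (X::real^'n^'n))\<^sup>2 = (\<Sum>i\<in>UNIV. (norm (X$i))\<^sup>2)"
  unfolding power2_norm_eq_inner inner_vec_def by (rule refl)

lemma norm_mono_entries:
  fixes X Y :: "real^'n^'n"
  assumes "\<And>i j. \<bar>X$i$j\<bar> \<le> \<bar>Y$i$j\<bar>"
  shows "norm X \<le> norm Y"
proof -
  have "(norm X)\<^sup>2 \<le> (norm Y)\<^sup>2"
    unfolding norm_sq_mat
    by (intro sum_mono) (simp add: abs_le_square_iff[symmetric] assms)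
  then show ?thesis by (rule power2_le_imp_le[OF _ norm_ge_zero])
qed

lemma norm_transpose_mat: "norm (transpose (X::real^'n^'n)) = norm X"
proof -
  have "(norm (transpose X))\<^sup>2 = (norm X)\<^sup>2"
    unfolding norm_sq_mat transpose_def by (simp, rule sum.swap)
  then show ?thesis by (rule power2_eq_imp_eq[OF _ norm_ge_zero norm_ge_zero])
qed

lemma norm_matvec: "norm ((H::real^'n^'n) *v w) \<le> norm H * norm w"
proof -
  have "(norm (H *v w))\<^sup>2 = (\<Sum>i\<in>UNIV. (H$i \<bullet> w)\<^sup>2)"
    unfolding power2_norm_eq_inner inner_vec_def[of "H *v w"]
    by (simp only: matrix_vector_mul_component power2_eq_square inner_real_def)
  also have "\<dots> \<le> (\<Sum>i\<in>UNIV. (norm (H$i))\<^sup>2 * (norm w)\<^sup>2)"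
  proof (intro sum_mono)
    fix i
    have "\<bar>H$i \<bullet> w\<bar> \<le> norm (H$i) * norm w" by (rule Cauchy_Schwarz_ineq2)
    then have "(H$i \<bullet> w)\<^sup>2 \<le> (norm (H$i) * norm w)\<^sup>2"
      by (metis abs_ge_zero abs_le_square_iff abs_of_nonneg mult_nonneg_nonneg norm_ge_zero)
    then show "(H$i \<bullet> w)\<^sup>2 \<le> (norm (H$i))\<^sup>2 * (norm w)\<^sup>2" by (simp add: power_mult_distrib)
  qed
  also have "\<dots> = (norm H * norm w)\<^sup>2"
    by (simp add: norm_sq_rows power_mult_distrib sum_distrib_right)
  finally show ?thesis by (rule power2_le_imp_le[OF _ mult_nonneg_nonneg[OF norm_ge_zero norm_ge_zero]])
qed

lemma qf_bound: "\<bar>qf H w\<bar> \<le> norm H * (w \<bullet> w)"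
proof -
  have "\<bar>qf H w\<bar> = \<bar>w \<bullet> (H *v w)\<bar>" by (simp add: qf_eq)
  also have "\<dots> \<le> norm w * norm (H *v w)" by (rule Cauchy_Schwarz_ineq2)
  also have "\<dots> \<le> norm w * (norm H * norm w)" by (simp add: mult_left_mono norm_matvec)
  also have "\<dots> = norm H * (norm w)\<^sup>2" by (simp add: power2_eq_square)
  also have "\<dots> = norm H * (w \<bullet> w)" unfolding power2_norm_eq_inner by (rule refl)
  finally show ?thesis .
qed

lemma mm_row: "((A::real^'n^'n) ** B)$i = transpose B *v (A$i)"
  apply (simp add: matrix_matrix_mult_def matrix_vector_mult_def transpose_def vec_eq_iff)
  apply (intro allI sum.cong refl)
  by (simp add: mult.commute)

lemma norm_mm: "norm ((A::real^'n^'n) ** (B::real^'n^'n)) \<le> norm A * norm B"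
proof -
  have "(norm (A ** B))\<^sup>2 = (\<Sum>i\<in>UNIV. (norm ((A ** B)$i))\<^sup>2)" by (rule norm_sq_rows)
  also have "\<dots> \<le> (\<Sum>i\<in>UNIV. (norm B * norm (A$i))\<^sup>2)"
  proof (intro sum_mono)
    fix i
    have "norm ((A ** B)$i) \<le> norm B * norm (A$i)"
      using norm_matvec[of "transpose B" "A$i"] by (simp add: mm_row norm_transpose_mat)
    then show "(norm ((A ** B)$i))\<^sup>2 \<le> (norm B * norm (A$i))\<^sup>2"
      by (simp add: power_mono)
  qed
  also have "\<dots> = (norm B)\<^sup>2 * (\<Sum>i\<in>UNIV. (norm (A$i))\<^sup>2)"
    by (simp add: power_mult_distrib sum_distrib_left)
  also have "\<dots> = (norm A * norm B)\<^sup>2"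
    unfolding norm_sq_rows[of A, symmetric] by (simp add: power_mult_distrib)
  finally show ?thesis by (rule power2_le_imp_le[OF _ mult_nonneg_nonneg[OF norm_ge_zero norm_ge_zero]])
qed

definition blk :: "'n set \<Rightarrow> 'n set \<Rightarrow> real^'n^'n \<Rightarrow> real^'n^'n" where
  "blk S T X = (\<chi> i j. if i \<in> S \<and> j \<in> T then X$i$j else 0)"

definition msk :: "'n set \<Rightarrow> real^'n \<Rightarrow> real^'n" where
  "msk S v = (\<chi> i. if i \<in> S then v$i else 0)"

lemma blk_nth[simp]: "blk S T X $ i $ j = (if i \<in> S \<and> j \<in> T then X$i$j else 0)"
  by (simp add: blk_def)

lemma norm_blk: "norm (blk S T X) \<le> norm X"
  by (rule norm_mono_entries) simp

lemma blk_add: "blk S T (X + Y) = blk S T X + blk S T Y"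
  by (simp add: vec_eq_iff)
lemma blk_diff: "blk S T (X - Y) = blk S T X - blk S T Y"
  by (simp add: vec_eq_iff)
lemma blk_uminus: "blk S T (- X) = - blk S T X"
  by (simp add: vec_eq_iff)
lemma blk_scale: "blk S T (c *\<^sub>R X) = c *\<^sub>R blk S T X"
  by (simp add: vec_eq_iff)

lemma qf_blk: "qf (blk S S X) v = qf X (msk S v)"
  unfolding qf_def msk_def
  by (intro sum.cong refl) auto

lemma blk_psd: "X \<in> psd_cone \<Longrightarrow> blk S S X \<in> psd_cone"
  by (simp add: psd_iff qf_blk sym_iff)

lemma trace_blk_inner: "blk S S X \<bullet> blk S S (mat 1) = trace (blk S S X)"
proof -
  have e: "(\<Sum>j\<in>UNIV. if i\<in>S \<and> j\<in>S then if i = j then X$j$j else 0 else 0) = (if i \<in> S then X$i$i else 0)" for i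
  proof -
    have "(\<Sum>j\<in>UNIV. if i\<in>S \<and> j\<in>S then if i = j then X$j$j else 0 else 0)
       = (\<Sum>j\<in>UNIV. if j = i then (if i \<in> S then X$i$i else 0) else 0)" by (intro sum.cong) auto
    then show ?thesis by simp
  qed
  show ?thesis
    unfolding inner_mat trace_def by (simp add: mat_def if_distrib[of "\<lambda>x. _ * x"] e cong: if_cong)
qed

lemma blk_bound:
  fixes A G :: "real^'n^'n"
  assumes A: "A \<in> psd_cone" and G: "G \<in> psd_cone" and c: "0 \<le> c"
  shows "c * norm (blk S S A) \<le> blk S S A \<bullet> (blk S S A + G + c *\<^sub>R blk S S (mat 1))"
proof -
  have AS: "blk S S A \<in> psd_cone" using blk_psd[OF A] .
  have "c * norm (blk S S A) \<le> c * trace (blk S S A)"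
    using psd_norm_le_trace[OF AS] c by (simp add: mult_left_mono)
  also have "\<dots> = blk S S A \<bullet> (c *\<^sub>R blk S S (mat 1))" by (simp add: trace_blk_inner)
  also have "\<dots> \<le> blk S S A \<bullet> (blk S S A + G + c *\<^sub>R blk S S (mat 1))"
    using psd_inner_nonneg[OF AS G] by (simp add: inner_add_right)
  finally show ?thesis .
qed



lemma qf_diag: "qf (diag_mat l) w = (\<Sum>i\<in>UNIV. l$i * (w$i)\<^sup>2)"
proof -
  have e: "(\<Sum>j\<in>UNIV. w$i * (if i = j then l$i else 0) * w$j) = l$i * (w$i)\<^sup>2" for i
  proof -
    have "(\<Sum>j\<in>UNIV. w$i * (if i = j then l$i else 0) * w$j) = (\<Sum>j\<in>UNIV. if j = i then l$i * (w$i)\<^sup>2 else 0)"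
      by (intro sum.cong) (auto simp: power2_eq_square)
    then show ?thesis by simp
  qed
  show ?thesis unfolding qf_def diag_mat_def by (simp add: e)
qed

lemma qf_id: "qf (mat 1) (w::real^'n) = (\<Sum>i\<in>UNIV. (w$i)\<^sup>2)"
proof -
  have "(mat 1 :: real^'n^'n) = diag_mat (\<chi> i. (1::real))" by (simp add: mat_def diag_mat_def vec_eq_iff)
  then show ?thesis by (simp add: qf_diag)
qed

lemma inner_msk: "msk S v \<bullet> msk S v = (\<Sum>i\<in>UNIV. (msk S v$i)\<^sup>2)"
  by (simp add: inner_vec_def power2_eq_square)

lemma blk_margin:
  fixes lam :: "real^'n" and K :: "real^'n^'n"
  assumes S: "\<forall>i\<in>S. \<mu> \<le> lam$i" and Ks: "transpose K = K" and Kn: "norm K \<le> \<mu> - c"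
  shows "blk S S (diag_mat lam + K) - c *\<^sub>R blk S S (mat 1) \<in> psd_cone"
proof -
  have sy: "transpose (blk S S (diag_mat lam + K) - c *\<^sub>R blk S S (mat 1)) = blk S S (diag_mat lam + K) - c *\<^sub>R blk S S (mat 1)"
    using Ks unfolding sym_iff by (auto simp: diag_mat_def mat_def)
  have "0 \<le> qf (blk S S (diag_mat lam + K) - c *\<^sub>R blk S S (mat 1)) v" for v
  proof -
    define w where "w = msk S v"
    define s where "s = (\<Sum>i\<in>UNIV. (w$i)\<^sup>2)"
    have ww: "w \<bullet> w = s" unfolding s_def w_def by (rule inner_msk)
    have d: "qf (diag_mat lam) w \<ge> \<mu> * s"
    proof -
      have "\<mu> * s = (\<Sum>i\<in>UNIV. \<mu> * (w$i)\<^sup>2)" by (simp add: s_def sum_distrib_left)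
      also have "\<dots> \<le> (\<Sum>i\<in>UNIV. lam$i * (w$i)\<^sup>2)"
      proof (intro sum_mono)
        fix i
        show "\<mu> * (w$i)\<^sup>2 \<le> lam$i * (w$i)\<^sup>2"
        proof (cases "i \<in> S")
          case True then show ?thesis using S by (simp add: mult_right_mono)
        next
          case False then show ?thesis by (simp add: w_def msk_def)
        qed
      qed
      finally show ?thesis by (simp add: qf_diag)
    qed
    have "\<bar>qf K w\<bar> \<le> norm K * s" using qf_bound[of K w] ww by simp
    then have k: "qf K w \<ge> - (norm K * s)" by (simp add: abs_le_iff)
    have "qf (blk S S (diag_mat lam + K) - c *\<^sub>R blk S S (mat 1)) v
        = qf (diag_mat lam) w + qf K w - c * s"
      by (simp add: qf_diff qf_scale qf_blk qf_add w_def[symmetric] qf_id s_def)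
    also have "\<dots> \<ge> (\<mu> - norm K - c) * s" using d k by (simp add: algebra_simps)
    finally have fin: "(\<mu> - norm K - c) * s \<le> qf (blk S S (diag_mat lam + K) - c *\<^sub>R blk S S (mat 1)) v" .
    have "0 \<le> \<mu> - norm K - c" using Kn by simp
    moreover have "0 \<le> s" unfolding s_def by (intro sum_nonneg) simp
    ultimately have "0 \<le> (\<mu> - norm K - c) * s" by (rule mult_nonneg_nonneg)
    then show ?thesis using fin by linarith
  qed
  then show ?thesis using sy psd_iff by blast
qed



definition Pp :: "real^'n \<Rightarrow> 'n set" where "Pp lam = {i. 0 < lam$i}"
definition Nn :: "real^'n \<Rightarrow> 'n set" where "Nn lam = {i. lam$i < 0}"
definition offb :: "real^'n \<Rightarrow> real^'n^'n \<Rightarrow> real^'n^'n" where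
  "offb lam X = (\<chi> i j. if (0 < lam$i) = (0 < lam$j) then 0 else X$i$j)"

lemma offb_nth[simp]: "offb lam X $ i $ j = (if (0 < lam$i) = (0 < lam$j) then 0 else X$i$j)"
  by (simp add: offb_def)

lemma nz_cases: "(lam::real^'n)$i \<noteq> 0 \<Longrightarrow> (0 < lam$i \<and> \<not> lam$i < 0) \<or> (lam$i < 0 \<and> \<not> 0 < lam$i)"
  by auto

lemma split3:
  assumes nz: "\<forall>i. lam$i \<noteq> 0"
  shows "X = blk (Pp lam) (Pp lam) X + blk (Nn lam) (Nn lam) X + offb lam X"
  unfolding vec_eq_iff
proof (intro allI)
  fix i j
  show "X$i$j = (blk (Pp lam) (Pp lam) X + blk (Nn lam) (Nn lam) X + offb lam X)$i$j"
    using nz_cases[of lam i] nz_cases[of lam j] nz by (auto simp: Pp_def Nn_def)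
qed

lemma inner3:
  assumes nz: "\<forall>i. lam$i \<noteq> 0"
  shows "X \<bullet> Y = blk (Pp lam) (Pp lam) X \<bullet> blk (Pp lam) (Pp lam) Y
     + blk (Nn lam) (Nn lam) X \<bullet> blk (Nn lam) (Nn lam) Y + offb lam X \<bullet> offb lam Y"
proof -
  have "X$i$j * Y$i$j = blk (Pp lam) (Pp lam) X$i$j * blk (Pp lam) (Pp lam) Y$i$j
     + blk (Nn lam) (Nn lam) X$i$j * blk (Nn lam) (Nn lam) Y$i$j + offb lam X$i$j * offb lam Y$i$j" for i j
    using nz_cases[of lam i] nz_cases[of lam j] nz by (auto simp: Pp_def Nn_def)
  then show ?thesis unfolding inner_mat by (simp add: sum.distrib)
qed

lemma norm_offb: "norm (offb lam X) \<le> norm X"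
  by (rule norm_mono_entries) simp

lemma offb_add: "offb lam (X + Y) = offb lam X + offb lam Y"
  by (simp add: vec_eq_iff)
lemma offb_diff: "offb lam (X - Y) = offb lam X - offb lam Y"
  by (simp add: vec_eq_iff)
lemma offb_blkP: "offb lam (blk (Pp lam) (Pp lam) X) = 0"
  by (simp add: vec_eq_iff Pp_def)
lemma offb_blkN: "offb lam (blk (Nn lam) (Nn lam) X) = 0"
  by (simp add: vec_eq_iff Nn_def)
lemma offb_diag: "offb lam (diag_mat lam) = 0"
  by (simp add: vec_eq_iff diag_mat_def)

lemma blk_diag_mm: "(blk S S (diag_mat l) ** (B::real^'n^'n))$i$j = (if i \<in> S then l$i * B$i$j else 0)"
proof -
  have "(blk S S (diag_mat l) ** B)$i$j = (\<Sum>k\<in>UNIV. blk S S (diag_mat l) $i$k * B$k$j)"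
    by (simp add: matrix_matrix_mult_def)
  also have "\<dots> = (\<Sum>k\<in>UNIV. if k = i then (if i \<in> S then l$i * B$i$j else 0) else 0)"
    by (intro sum.cong) (auto simp: diag_mat_def)
  finally show ?thesis by simp
qed

lemma mm_blk_diag: "((B::real^'n^'n) ** blk S S (diag_mat l))$i$j = (if j \<in> S then B$i$j * l$j else 0)"
proof -
  have "(B ** blk S S (diag_mat l))$i$j = (\<Sum>k\<in>UNIV. B$i$k * blk S S (diag_mat l) $k$j)"
    by (simp add: matrix_matrix_mult_def)
  also have "\<dots> = (\<Sum>k\<in>UNIV. if k = j then (if j \<in> S then B$i$j * l$j else 0) else 0)"
    by (intro sum.cong) (auto simp: diag_mat_def)
  finally show ?thesis by simp
qed

lemma blk_mm_disj: "S \<inter> T = {} \<Longrightarrow> blk S S A ** blk T T (B::real^'n^'n) = 0"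
  unfolding matrix_matrix_mult_def vec_eq_iff
  by (auto intro!: sum.neutral)

lemma Omega_sym: "Omega (l::real^'n) $ i $ j = Omega l $ j $ i"
  unfolding Omega_def
  by (cases "0 < l$i"; cases "0 < l$j"; cases "l$i < 0"; cases "l$j < 0"; simp)

lemma hadamard_nth[simp]: "hadamard M N $ i $ j = M$i$j * N$i$j"
  by (simp add: hadamard_def)

lemma diag_uminus: "diag_mat (- l) = - diag_mat l"
  by (simp add: diag_mat_def vec_eq_iff)



lemma key_bound:
  fixes lam :: "real^'n" and X Y H E :: "real^'n^'n"
  assumes nz: "\<forall>i. lam$i \<noteq> 0" and mu: "0 < \<mu>" "\<forall>i. \<mu> \<le> \<bar>lam$i\<bar>"
    and Hs: "transpose H = H" and Hb: "offb lam H = 0" and Es: "transpose E = E"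
    and X: "X \<in> psd_cone" and Y: "Y \<in> psd_cone" and XY: "X \<bullet> Y = 0"
    and dec: "X - Y = diag_mat lam + H + E"
    and lip: "norm (X - blk (Pp lam) (Pp lam) (diag_mat lam + H)) \<le> norm E"
    and small: "norm H + norm E \<le> \<mu>/2"
  shows "norm (X - blk (Pp lam) (Pp lam) (diag_mat lam + H) - hadamard (Omega lam) E)
          \<le> 8/\<mu> * norm E * (norm E + norm H)"
proof -
  define P where "P = Pp lam"
  define N where "N = Nn lam"
  define D0 where "D0 = diag_mat lam + H"
  define X0 where "X0 = blk P P D0"
  define Y0 where "Y0 = blk N N D0"
  define \<Delta> where "\<Delta> = X - X0"
  define c where "c = \<mu>/2"
  define R where "R = X - X0 - hadamard (Omega lam) E"
  have PN: "P \<inter> N = {}" by (auto simp: P_def N_def Pp_def Nn_def)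
  have inP: "i \<in> P \<longleftrightarrow> 0 < lam$i" for i by (simp add: P_def Pp_def)
  have inN: "i \<in> N \<longleftrightarrow> lam$i < 0" for i by (simp add: N_def Nn_def)
  have offD0: "offb lam D0 = 0" using Hb by (simp add: D0_def offb_add offb_diag)
  have D0s: "D0 = X0 + Y0" using split3[OF nz, of D0] offD0 by (simp add: X0_def Y0_def P_def N_def)
  have "Y = X - D0 - E" using dec by (simp add: D0_def algebra_simps)
  then have Yeq: "Y = \<Delta> - E - Y0" using D0s by (simp add: \<Delta>_def algebra_simps)
  have nD: "norm \<Delta> \<le> norm E" using lip by (simp add: \<Delta>_def X0_def P_def D0_def)
  have nE0: "0 \<le> norm E" by simp
  have offX: "offb lam X = offb lam \<Delta>"
    by (simp add: \<Delta>_def offb_diff X0_def P_def offb_blkP)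
  have offY: "offb lam Y = offb lam (\<Delta> - E)"
    by (simp add: Yeq offb_diff Y0_def N_def offb_blkN)
  have noffX: "norm (offb lam X) \<le> norm E" using norm_offb[of lam \<Delta>] nD offX by simp
  have noffY: "norm (offb lam Y) \<le> 2 * norm E"
  proof -
    have "norm (offb lam Y) \<le> norm (\<Delta> - E)" using norm_offb[of lam "\<Delta> - E"] offY by simp
    also have "\<dots> \<le> norm \<Delta> + norm E" by (rule norm_triangle_ineq4)
    finally show ?thesis using nD by simp
  qed
  have GN: "blk N N (diag_mat (-lam) + (-(H + E))) - c *\<^sub>R blk N N (mat 1) \<in> psd_cone"
  proof (rule blk_margin)
    show "\<forall>i\<in>N. \<mu> \<le> (-lam)$i"
    proof
      fix i assume "i \<in> N"
      then have "lam$i < 0" using inN by simp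
      then show "\<mu> \<le> (-lam)$i" using mu(2)[rule_format, of i] by simp
    qed
    show "transpose (-(H + E)) = -(H + E)" using Hs Es by (simp add: transpose_def vec_eq_iff)
    have "norm (-(H + E)) \<le> norm H + norm E" unfolding norm_minus_cancel by (rule norm_triangle_ineq)
    then show "norm (-(H + E)) \<le> \<mu> - c" using small by (simp add: c_def)
  qed
  have GP: "blk P P (diag_mat lam + (H + E)) - c *\<^sub>R blk P P (mat 1) \<in> psd_cone"
  proof (rule blk_margin)
    show "\<forall>i\<in>P. \<mu> \<le> lam$i"
    proof
      fix i assume "i \<in> P"
      then have "lam$i > 0" using inP by simp
      then show "\<mu> \<le> lam$i" using mu(2)[rule_format, of i] by simp
    qed
    show "transpose (H + E) = H + E" using Hs Es by (simp add: transpose_def vec_eq_iff)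
    have "norm (H + E) \<le> norm H + norm E" by (rule norm_triangle_ineq)
    then show "norm (H + E) \<le> \<mu> - c" using small by (simp add: c_def)
  qed
  have YN: "blk N N Y = blk N N X + (blk N N (diag_mat (-lam) + (-(H + E))) - c *\<^sub>R blk N N (mat 1)) + c *\<^sub>R blk N N (mat 1)"
  proof -
    have "Y = X - (diag_mat lam + H + E)" using dec by (simp add: algebra_simps)
    then show ?thesis by (simp add: vec_eq_iff diag_mat_def)
  qed
  have XP: "blk P P X = blk P P Y + (blk P P (diag_mat lam + (H + E)) - c *\<^sub>R blk P P (mat 1)) + c *\<^sub>R blk P P (mat 1)"
  proof -
    have "X = Y + (diag_mat lam + H + E)" using dec by (simp add: algebra_simps)
    then show ?thesis by (simp add: vec_eq_iff diag_mat_def)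
  qed
  have c0: "0 \<le> c" using mu by (simp add: c_def)
  have bN: "c * norm (blk N N X) \<le> blk N N X \<bullet> blk N N Y"
    unfolding YN by (rule blk_bound[OF X GN c0])
  have bP: "c * norm (blk P P Y) \<le> blk P P X \<bullet> blk P P Y"
    unfolding XP inner_commute[of _ "blk P P Y"] by (rule blk_bound[OF Y GP c0])
  have "0 = blk P P X \<bullet> blk P P Y + blk N N X \<bullet> blk N N Y + offb lam X \<bullet> offb lam Y"
    using inner3[OF nz, of X Y] XY by (simp add: P_def N_def)
  moreover have "- (offb lam X \<bullet> offb lam Y) \<le> norm (offb lam X) * norm (offb lam Y)"
    using Cauchy_Schwarz_ineq2[of "offb lam X" "offb lam Y"] by linarith
  moreover have "norm (offb lam X) * norm (offb lam Y) \<le> norm E * (2 * norm E)"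
    using noffX noffY by (simp add: mult_mono)
  ultimately have "c * (norm (blk P P Y) + norm (blk N N X)) \<le> 2 * (norm E)\<^sup>2"
    using bN bP by (simp add: algebra_simps power2_eq_square)
  then have diagb: "norm (blk P P Y) + norm (blk N N X) \<le> 4 / \<mu> * (norm E)\<^sup>2"
    using mu by (simp add: c_def field_simps)
  have XY0: "X ** Y = 0" using psd_inner_zero[OF X Y XY] by simp
  define Hp where "Hp = blk P P H"
  define Hn where "Hn = blk N N H"
  have X0e: "X0 = blk P P (diag_mat lam) + Hp" by (simp add: X0_def D0_def Hp_def blk_add)
  have Y0e: "Y0 = blk N N (diag_mat lam) + Hn" by (simp add: Y0_def D0_def Hn_def blk_add)
  have X0Y0: "X0 ** Y0 = 0" unfolding X0_def Y0_def by (rule blk_mm_disj[OF PN])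
  define \<rho> where "\<rho> = \<Delta> ** Hn - Hp ** (\<Delta> - E) - \<Delta> ** (\<Delta> - E)"
  have expand: "X ** Y = X0 ** (\<Delta> - E) - X0 ** Y0 + \<Delta> ** (\<Delta> - E) - \<Delta> ** Y0"
  proof -
    have "X ** Y = (X0 + \<Delta>) ** ((\<Delta> - E) - Y0)" using Yeq by (simp add: \<Delta>_def)
    then show ?thesis by (simp only: mm_add_l mm_diff_r) (simp add: algebra_simps)
  qed
  have X0mix: "X0$i$j = 0" if "i \<in> P" "j \<in> N" for i j using that PN by (auto simp: X0_def)
  have rel: "lam$i * (\<Delta>$i$j - E$i$j) - \<Delta>$i$j * lam$j = \<rho>$i$j" if ij: "i \<in> P" "j \<in> N" for i j
  proof -
    have "0 = (X ** Y)$i$j" using XY0 by simp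
    also have "\<dots> = (X0 ** (\<Delta> - E))$i$j - (X0 ** Y0)$i$j + (\<Delta> ** (\<Delta> - E))$i$j - (\<Delta> ** Y0)$i$j"
      by (simp add: expand)
    also have "\<dots> = lam$i * (\<Delta>$i$j - E$i$j) + (Hp ** (\<Delta> - E))$i$j + (\<Delta> ** (\<Delta> - E))$i$j
          - \<Delta>$i$j * lam$j - (\<Delta> ** Hn)$i$j"
    proof -
      have a: "(X0 ** (\<Delta> - E))$i$j = lam$i * (\<Delta>$i$j - E$i$j) + (Hp ** (\<Delta> - E))$i$j"
        using ij by (simp add: X0e mm_add_l blk_diag_mm)
      have b: "(\<Delta> ** Y0)$i$j = \<Delta>$i$j * lam$j + (\<Delta> ** Hn)$i$j"
        using ij by (simp add: Y0e mm_add_r mm_blk_diag)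
      show ?thesis using a b X0Y0 by simp
    qed
    finally show ?thesis by (simp add: \<rho>_def algebra_simps)
  qed
  have nrho: "norm \<rho> \<le> 3 * norm E * norm H + 2 * (norm E)\<^sup>2"
  proof -
    have nHp: "norm Hp \<le> norm H" and nHn: "norm Hn \<le> norm H" by (simp_all add: Hp_def Hn_def norm_blk)
    have nDE: "norm (\<Delta> - E) \<le> 2 * norm E"
      using norm_triangle_ineq4[of \<Delta> E] nD by simp
    have "norm \<rho> \<le> norm (\<Delta> ** Hn) + norm (Hp ** (\<Delta> - E)) + norm (\<Delta> ** (\<Delta> - E))"
      unfolding \<rho>_def by (rule order_trans[OF norm_triangle_ineq4] , simp add: norm_triangle_ineq4 add_right_mono)
    also have "\<dots> \<le> norm \<Delta> * norm Hn + norm Hp * norm (\<Delta> - E) + norm \<Delta> * norm (\<Delta> - E)"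
      by (intro add_mono norm_mm)
    also have "\<dots> \<le> norm E * norm H + norm H * (2 * norm E) + norm E * (2 * norm E)"
      by (intro add_mono mult_mono nD nHn nHp nDE) simp_all
    finally show ?thesis by (simp add: algebra_simps power2_eq_square)
  qed
  have Rs: "transpose R = R"
  proof -
    have Xs: "transpose X = X" using X psd_iff by blast
    have D0sy: "transpose D0 = D0" using Hs by (simp add: D0_def sym_iff diag_mat_def)
    show ?thesis using Xs D0sy Es Omega_sym[of lam]
      by (simp add: R_def sym_iff X0_def)
  qed
  have Rmix: "\<bar>R$i$j\<bar> \<le> \<bar>\<rho>$i$j\<bar> / \<mu>" if ij: "i \<in> P" "j \<in> N" for i j
  proof -
    have li: "lam$i \<ge> \<mu>" using mu(2) ij inP by (metis abs_of_pos)
    have lj: "lam$j < 0" using ij inN by simp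
    have pos: "lam$i - lam$j \<ge> \<mu>" using li lj by simp
    have Om: "Omega lam $ i $ j = lam$i / (lam$i - lam$j)" using ij inP inN by (simp add: Omega_def)
    have Dij: "\<Delta>$i$j = X$i$j" using X0mix[OF ij] by (simp add: \<Delta>_def)
    have "R$i$j = X$i$j - lam$i / (lam$i - lam$j) * E$i$j" using X0mix[OF ij] Om by (simp add: R_def)
    also have "\<dots> = \<rho>$i$j / (lam$i - lam$j)"
      using rel[OF ij] Dij pos mu by (simp add: field_simps)
    finally have "\<bar>R$i$j\<bar> = \<bar>\<rho>$i$j\<bar> / (lam$i - lam$j)" using pos mu by simp
    also have "\<dots> \<le> \<bar>\<rho>$i$j\<bar> / \<mu>" using pos mu by (simp add: frac_le)
    finally show ?thesis .
  qed
  define \<rho>' where "\<rho>' = blk P N \<rho> + transpose (blk P N \<rho>)"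
  have offR: "norm (offb lam R) \<le> norm ((1/\<mu>) *\<^sub>R \<rho>')"
  proof (rule norm_mono_entries)
    fix i j
    show "\<bar>offb lam R $ i $ j\<bar> \<le> \<bar>((1/\<mu>) *\<^sub>R \<rho>') $ i $ j\<bar>"
    proof (cases "i \<in> P")
      case iP: True
      show ?thesis
      proof (cases "j \<in> P")
        case True then show ?thesis using iP inP by simp
      next
        case False
        then have jN: "j \<in> N" using nz inP inN by (metis linorder_neqE_linordered_idom)
        have "\<rho>'$i$j = \<rho>$i$j" using iP False jN by (simp add: \<rho>'_def transpose_def)
        then show ?thesis using Rmix[OF iP jN] iP False inP mu by (simp add: abs_mult divide_inverse mult.commute)
      qed
    next
      case iN': False
      then have iN: "i \<in> N" using nz inP inN by (metis linorder_neqE_linordered_idom)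
      show ?thesis
      proof (cases "j \<in> P")
        case jP: True
        have "\<rho>'$i$j = \<rho>$j$i" using iN' jP iN by (simp add: \<rho>'_def transpose_def)
        moreover have "R$i$j = R$j$i" using Rs sym_iff by metis
        ultimately show ?thesis using Rmix[OF jP iN] iN' jP inP mu by (simp add: abs_mult divide_inverse mult.commute)
      next
        case False then show ?thesis using iN' inP by simp
      qed
    qed
  qed
  have nrho': "norm \<rho>' \<le> 2 * norm \<rho>"
  proof -
    have "norm \<rho>' \<le> norm (blk P N \<rho>) + norm (transpose (blk P N \<rho>))"
      unfolding \<rho>'_def by (rule norm_triangle_ineq)
    also have "\<dots> \<le> norm \<rho> + norm \<rho>" by (simp add: norm_transpose_mat norm_blk add_mono)
    finally show ?thesis by simp
  qed
  have RPP: "blk P P R = blk P P Y"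
  proof -
    have "Y = X - (diag_mat lam + H + E)" using dec by (simp add: algebra_simps)
    then show ?thesis using inP by (simp add: vec_eq_iff R_def X0_def D0_def Omega_def)
  qed
  have RNN: "blk N N R = blk N N X"
    using PN inN inP by (simp add: vec_eq_iff R_def X0_def Omega_def)
  have "norm R \<le> norm (blk P P R) + norm (blk N N R) + norm (offb lam R)"
  proof -
    have e: "R = blk P P R + blk N N R + offb lam R" using split3[OF nz, of R] by (simp add: P_def N_def)
    have "norm (blk P P R + blk N N R + offb lam R) \<le> norm (blk P P R + blk N N R) + norm (offb lam R)"
      by (rule norm_triangle_ineq)
    also have "\<dots> \<le> norm (blk P P R) + norm (blk N N R) + norm (offb lam R)"
      using norm_triangle_ineq[of "blk P P R" "blk N N R"] by simp
    finally show ?thesis using e by simp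
  qed
  also have "\<dots> \<le> 4 / \<mu> * (norm E)\<^sup>2 + (1/\<mu>) * (2 * (3 * norm E * norm H + 2 * (norm E)\<^sup>2))"
  proof -
    have "norm (offb lam R) \<le> (1/\<mu>) * norm \<rho>'" using offR mu by simp
    also have "\<dots> \<le> (1/\<mu>) * (2 * (3 * norm E * norm H + 2 * (norm E)\<^sup>2))"
      using nrho' nrho mu by (intro mult_left_mono) simp_all
    finally show ?thesis using diagb RPP RNN by simp
  qed
  also have "\<dots> = 8/\<mu> * norm E * (norm E + norm H) - 2/\<mu> * norm E * norm H"
    using mu(1) by (simp add: field_simps power2_eq_square)
  also have "\<dots> \<le> 8/\<mu> * norm E * (norm E + norm H)"
    using mu by simp
  finally show ?thesis by (simp add: R_def X0_def P_def D0_def)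
qed



lemma frob_sym_left:
  assumes s: "transpose (A::real^'n^'n) = A"
  shows "frob A X = A \<bullet> X"
proof -
  have sy: "\<And>i j. A$i$j = A$j$i" using s sym_iff by metis
  have "frob A X = (\<Sum>i\<in>UNIV. \<Sum>k\<in>UNIV. A$i$k * X$k$i)"
    by (simp add: frob_def trace_def matrix_matrix_mult_def)
  also have "\<dots> = (\<Sum>i\<in>UNIV. \<Sum>k\<in>UNIV. A$k$i * X$k$i)"
    by (intro sum.cong refl) (metis sy)
  also have "\<dots> = (\<Sum>k\<in>UNIV. \<Sum>i\<in>UNIV. A$k$i * X$k$i)" by (rule sum.swap)
  also have "\<dots> = A \<bullet> X" by (simp add: inner_mat)
  finally show ?thesis .
qed

lemma frob_add_r: "frob A (X + Y) = frob A X + frob A Y"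
  by (simp add: frob_def mm_add_r trace_add)
lemma frob_scale_r: "frob A (c *\<^sub>R X) = c * frob A X"
  by (simp add: frob_def mm_scale_r trace_def sum_distrib_left)

lemma opA_add: "opA A (X + Y) = opA A X + opA A Y"
  by (simp add: opA_def vec_eq_iff frob_add_r)
lemma opA_scale: "opA A (c *\<^sub>R X) = c *\<^sub>R opA A X"
  by (simp add: opA_def vec_eq_iff frob_scale_r)
lemma opAadj_add: "opAadj A (y + z) = opAadj A y + opAadj A z"
  by (simp add: opAadj_def scaleR_add_left sum.distrib)
lemma opAadj_scale: "opAadj A (c *\<^sub>R y) = c *\<^sub>R opAadj A y"
  by (simp add: opAadj_def scaleR_sum_right)

lemma projP_linear: "linear (projP A)"
  by (intro linearI)
     (simp_all add: projP_def opA_add opA_scale opAadj_add opAadj_scale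
        matrix_vector_right_distrib matrix_vector_mult_scaleR)

lemma projP_add: "projP A (X + Y) = projP A X + projP A Y"
  using projP_linear linear_add by blast
lemma projP_diff: "projP A (X - Y) = projP A X - projP A Y"
  using projP_linear linear_diff by blast
lemma projP_scale: "projP A (c *\<^sub>R X) = c *\<^sub>R projP A X"
  using projP_linear linear_scale by blast
lemma projP_uminus: "projP A (- X) = - projP A X"
  using projP_linear linear_neg by blast

lemma opAadj_sym:
  assumes "\<forall>i. A i \<in> sym_mats"
  shows "transpose (opAadj A y) = opAadj A y"
proof -
  have "\<And>i. transpose (A i) = A i" using assms by (simp add: sym_mats_def)
  then show ?thesis
    by (simp add: opAadj_def sym_iff sum_component)
qed

lemma projP_sym: "\<forall>i. A i \<in> sym_mats \<Longrightarrow> transpose (projP A X) = projP A X"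
  by (simp add: projP_def opAadj_sym)

lemma adj_inner:
  assumes "\<forall>i. A i \<in> sym_mats"
  shows "opAadj A y \<bullet> X = y \<bullet> opA A X"
proof -
  have s: "\<And>i. transpose (A i) = A i" using assms by (simp add: sym_mats_def)
  have "opAadj A y \<bullet> X = (\<Sum>j\<in>UNIV. y$j * (A j \<bullet> X))" by (simp add: opAadj_def inner_sum_left)
  also have "\<dots> = y \<bullet> opA A X" by (simp add: opA_def inner_vec_def[of y] frob_sym_left[OF s])
  finally show ?thesis .
qed

lemma frob_linear: "linear (frob B)"
  by (intro linearI) (simp_all add: frob_add_r frob_scale_r)

lemma gram_mult: "gramA A *v y = opA A (opAadj A y)"
proof -
  have "frob (A i) (\<Sum>j\<in>UNIV. y$j *\<^sub>R A j) = (\<Sum>j\<in>UNIV. frob (A i) (y$j *\<^sub>R A j))" for i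
    by (rule linear_sum[OF frob_linear])
  then show ?thesis
    by (simp add: vec_eq_iff gramA_def opA_def opAadj_def matrix_vector_mult_def frob_scale_r mult.commute)
qed



lemma gram_inv:
  assumes As: "\<forall>i. A i \<in> sym_mats" and Asurj: "\<forall>v. \<exists>X \<in> sym_mats. opA A X = v"
  shows "matrix_inv (gramA A) ** gramA A = mat 1 \<and> gramA A ** matrix_inv (gramA A) = mat 1"
proof -
  have inj: "y = 0" if "gramA A *v y = 0" for y
  proof -
    have "opAadj A y \<bullet> opAadj A y = y \<bullet> opA A (opAadj A y)" by (rule adj_inner[OF As])
    also have "\<dots> = 0" using that by (simp add: gram_mult)
    finally have z: "opAadj A y = 0" by simp
    obtain X where "X \<in> sym_mats" "opA A X = y" using Asurj by blast
    then have "y \<bullet> y = opAadj A y \<bullet> X" using adj_inner[OF As, of y X] by simp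
    then show "y = 0" using z by simp
  qed
  then have "\<exists>B. B ** gramA A = mat 1" using matrix_left_invertible_ker by blast
  then have "invertible (gramA A)" using invertible_left_inverse by blast
  then have "\<exists>A'. gramA A ** A' = mat 1 \<and> A' ** gramA A = mat 1" by (simp add: invertible_def)
  then have "gramA A ** matrix_inv (gramA A) = mat 1 \<and> matrix_inv (gramA A) ** gramA A = mat 1"
    unfolding matrix_inv_def by (rule someI_ex)
  then show ?thesis by simp
qed

lemma gram_sym: "\<forall>i. A i \<in> sym_mats \<Longrightarrow> transpose (gramA A) = gramA A"
  by (simp add: gramA_def sym_iff frob_sym_left sym_mats_def inner_commute)

lemma ginv_sym:
  assumes As: "\<forall>i. A i \<in> sym_mats" and Asurj: "\<forall>v. \<exists>X \<in> sym_mats. opA A X = v"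
  shows "transpose (matrix_inv (gramA A)) = matrix_inv (gramA A)"
proof -
  let ?G = "gramA A" and ?I = "matrix_inv (gramA A)"
  have i1: "?I ** ?G = mat 1" and i2: "?G ** ?I = mat 1" using gram_inv[OF As Asurj] by auto
  have "transpose ?I ** ?G = transpose (?G ** ?I)"
    using gram_sym[OF As] by (simp add: matrix_transpose_mul)
  then have l: "transpose ?I ** ?G = mat 1" using i2 by simp
  have "transpose ?I = transpose ?I ** (?G ** ?I)" using i2 by simp
  also have "\<dots> = ?I" using l by (simp add: matrix_mul_assoc)
  finally show ?thesis .
qed

lemma projP_adj:
  assumes As: "\<forall>i. A i \<in> sym_mats" and Asurj: "\<forall>v. \<exists>X \<in> sym_mats. opA A X = v"
  shows "projP A (opAadj A y) = opAadj A y"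
  using gram_inv[OF As Asurj]
  by (simp add: projP_def gram_mult[symmetric] matrix_vector_mul_assoc)

lemma projP_idem:
  assumes As: "\<forall>i. A i \<in> sym_mats" and Asurj: "\<forall>v. \<exists>X \<in> sym_mats. opA A X = v"
  shows "projP A (projP A X) = projP A X"
  by (metis projP_def projP_adj[OF As Asurj])

lemma projP_selfadj:
  assumes As: "\<forall>i. A i \<in> sym_mats" and Asurj: "\<forall>v. \<exists>X \<in> sym_mats. opA A X = v"
  shows "projP A X \<bullet> Y = X \<bullet> projP A Y"
proof -
  let ?I = "matrix_inv (gramA A)"
  have gs: "transpose ?I = ?I" by (rule ginv_sym[OF As Asurj])
  have sw: "(?I *v a) \<bullet> b = a \<bullet> (?I *v b)" for a b
  proof -
    have "?I *v a = a v* ?I" by (metis gs transpose_matrix_vector)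
    then show ?thesis by (simp add: dot_lmul_matrix)
  qed
  have "projP A X \<bullet> Y = (?I *v opA A X) \<bullet> opA A Y" by (simp add: projP_def adj_inner[OF As])
  also have "\<dots> = opA A X \<bullet> (?I *v opA A Y)" by (rule sw)
  also have "\<dots> = (?I *v opA A Y) \<bullet> opA A X" by (rule inner_commute)
  also have "\<dots> = projP A Y \<bullet> X" by (simp add: projP_def adj_inner[OF As])
  finally show ?thesis by (simp add: inner_commute)
qed

lemma opD_cj: "opD Q l H = cj (transpose Q) (hadamard (Omega l) (cj Q H))"
  by (simp add: opD_def cj_def matrix_mul_assoc)

lemma Omega_range: "0 \<le> Omega (l::real^'n) $ i $ j \<and> Omega l $ i $ j \<le> 1"
  unfolding Omega_def
  by (cases "0 < l$i"; cases "0 < l$j"; cases "l$i < 0"; cases "l$j < 0"; simp add: divide_le_eq_1)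

lemma Omega_mix: "0 < (l::real^'n)$i \<Longrightarrow> l$j < 0 \<Longrightarrow> 0 < Omega l $ i $ j \<and> Omega l $ i $ j < 1"
  unfolding Omega_def by (simp add: divide_less_eq_1)

lemma fix_offb:
  assumes As: "\<forall>i. A i \<in> sym_mats" and Asurj: "\<forall>v. \<exists>X \<in> sym_mats. opA A X = v"
    and Q: "orthogonal_matrix Q" and nz: "\<forall>i. lam$i \<noteq> 0"
    and fx: "opM A Q lam H = H"
  shows "offb lam (cj Q H) = 0"
proof -
  define a where "a = opD Q lam H"
  define b where "b = H - a"
  have "projP A b + (a - projP A a) = a + b" using fx by (simp add: opM_def a_def b_def)
  then have e: "projP A b - projP A a = b" by (simp add: algebra_simps)
  then have "projP A (projP A b - projP A a) = projP A b" by simp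
  then have Pa: "projP A a = 0" by (simp add: projP_diff projP_idem[OF As Asurj])
  then have Pb: "projP A b = b" using e by simp
  have ab: "a \<bullet> b = 0"
  proof -
    have "a \<bullet> b = a \<bullet> projP A b" using Pb by simp
    also have "\<dots> = projP A a \<bullet> b" by (simp add: projP_selfadj[OF As Asurj])
    finally show ?thesis using Pa by simp
  qed
  define H' where "H' = cj Q H"
  have Qt: "orthogonal_matrix (transpose Q)" using Q by simp
  have ca: "cj Q a = hadamard (Omega lam) H'"
    by (simp add: a_def opD_cj cj_inv2[OF Q] H'_def)
  have cb: "cj Q b = H' - hadamard (Omega lam) H'"
    by (simp add: b_def cj_diff ca H'_def)
  have "0 = cj Q a \<bullet> cj Q b" using ab cj_inner[OF Q] by simp
  also have "\<dots> = (\<Sum>i\<in>UNIV. \<Sum>j\<in>UNIV. Omega lam $i$j * (1 - Omega lam $i$j) * (H'$i$j)\<^sup>2)"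
    unfolding ca cb inner_mat by (simp add: algebra_simps power2_eq_square)
  finally have z: "(\<Sum>i\<in>UNIV. \<Sum>j\<in>UNIV. Omega lam $i$j * (1 - Omega lam $i$j) * (H'$i$j)\<^sup>2) = 0" by simp
  have nn: "0 \<le> Omega lam $i$j * (1 - Omega lam $i$j) * (H'$i$j)\<^sup>2" for i j
    using Omega_range[of lam i j] by simp
  have "\<forall>i\<in>UNIV. (\<Sum>j\<in>UNIV. Omega lam $i$j * (1 - Omega lam $i$j) * (H'$i$j)\<^sup>2) = 0"
    using z nn by (subst sum_nonneg_eq_0_iff[symmetric]) (auto intro: sum_nonneg)
  then have zz: "Omega lam $i$j * (1 - Omega lam $i$j) * (H'$i$j)\<^sup>2 = 0" for i j
    using nn by (simp add: sum_nonneg_eq_0_iff)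
  show ?thesis unfolding vec_eq_iff
  proof (intro allI)
    fix i j
    show "offb lam (cj Q H) $ i $ j = 0 $ i $ j"
    proof (cases "(0 < lam$i) = (0 < lam$j)")
      case True then show ?thesis by simp
    next
      case False
      then have "0 < Omega lam $i$j \<and> Omega lam $i$j < 1"
        using nz Omega_mix[of lam i j] Omega_mix[of lam j i] Omega_sym[of lam i j]
        by (metis linorder_neqE_linordered_idom)
      then have "H'$i$j = 0" using zz[of i j] by simp
      then show ?thesis using False by (simp add: H'_def)
    qed
  qed
qed



lemma step_formula:
  "admm_step A b C \<sigma> Z = projP A Z - 2 *\<^sub>R projP A (proj_psd Z) + proj_psd Z
     + (opAadj A (matrix_inv (gramA A) *v b) + \<sigma> *\<^sub>R projP A C - \<sigma> *\<^sub>R C)"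
  unfolding admm_step_def projP_add projP_scale by (simp add: algebra_simps)

lemma blk_disj_inner: "S \<inter> T = {} \<Longrightarrow> blk S S X \<bullet> blk T T Y = 0"
  unfolding inner_mat by (auto intro!: sum.neutral)

lemma proj_block:
  fixes lam :: "real^'n" and H' :: "real^'n^'n"
  assumes Q: "orthogonal_matrix Q" and nz: "\<forall>i. lam$i \<noteq> 0"
    and mu: "0 < \<mu>" "\<forall>i. \<mu> \<le> \<bar>lam$i\<bar>"
    and Hs: "transpose H' = H'" and Hb: "offb lam H' = 0" and Hn: "norm H' \<le> \<mu>"
  shows "proj_psd (cj (transpose Q) (diag_mat lam + H')) = cj (transpose Q) (blk (Pp lam) (Pp lam) (diag_mat lam + H'))"
proof -
  define P where "P = Pp lam"
  define N where "N = Nn lam"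
  have inP: "i \<in> P \<longleftrightarrow> 0 < lam$i" for i by (simp add: P_def Pp_def)
  have inN: "i \<in> N \<longleftrightarrow> lam$i < 0" for i by (simp add: N_def Nn_def)
  have PN: "P \<inter> N = {}" using inP inN by auto
  define X' where "X' = blk P P (diag_mat lam + H')"
  define Y' where "Y' = blk N N (diag_mat (-lam) + (-H'))"
  have X'p: "X' \<in> psd_cone"
  proof -
    have "blk P P (diag_mat lam + H') - 0 *\<^sub>R blk P P (mat 1) \<in> psd_cone"
    proof (rule blk_margin[OF _ Hs])
      show "\<forall>i\<in>P. \<mu> \<le> lam$i"
      proof
        fix i assume "i \<in> P" then have "0 < lam$i" using inP by simp
        then show "\<mu> \<le> lam$i" using mu(2)[rule_format, of i] by simp
      qed
      show "norm H' \<le> \<mu> - 0" using Hn by simp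
    qed
    then show ?thesis by (simp add: X'_def)
  qed
  have Y'p: "Y' \<in> psd_cone"
  proof -
    have "blk N N (diag_mat (-lam) + (-H')) - 0 *\<^sub>R blk N N (mat 1) \<in> psd_cone"
    proof (rule blk_margin)
      show "\<forall>i\<in>N. \<mu> \<le> (-lam)$i"
      proof
        fix i assume "i \<in> N" then have "lam$i < 0" using inN by simp
        then show "\<mu> \<le> (-lam)$i" using mu(2)[rule_format, of i] by simp
      qed
      show "transpose (-H') = -H'" using Hs by (simp add: transpose_def vec_eq_iff)
      show "norm (-H') \<le> \<mu> - 0" using Hn by simp
    qed
    then show ?thesis by (simp add: Y'_def)
  qed
  have dec: "X' - Y' = diag_mat lam + H'"
  proof -
    have o: "offb lam (diag_mat lam + H') = 0" using Hb by (simp add: offb_add offb_diag)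
    have "diag_mat lam + H' = X' + blk N N (diag_mat lam + H')"
      using split3[OF nz, of "diag_mat lam + H'"] o by (simp add: X'_def P_def N_def)
    moreover have "blk N N (diag_mat lam + H') = - Y'"
      by (simp add: Y'_def vec_eq_iff diag_mat_def)
    ultimately show ?thesis by simp
  qed
  have XY: "X' \<bullet> Y' = 0" unfolding X'_def Y'_def by (rule blk_disj_inner[OF PN])
  have Qt: "orthogonal_matrix (transpose Q)" using Q by simp
  let ?W = "cj (transpose Q) (diag_mat lam + H')"
  let ?X = "cj (transpose Q) X'"
  have "proj_psd ?W = ?X"
  proof (rule proj_unique)
    show "?X \<in> psd_cone" by (rule cj_psd[OF X'p])
    have "?X - ?W = cj (transpose Q) Y'" by (simp add: cj_diff[symmetric] dec[symmetric])
    then show "?X - ?W \<in> psd_cone" using cj_psd[OF Y'p] by simp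
    then show "?X \<bullet> (?X - ?W) = 0" using XY cj_inner[OF Qt]
      by (simp add: cj_diff[symmetric] dec[symmetric])
  qed
  then show ?thesis by (simp add: X'_def P_def)
qed

lemma hadamard_offb_zero:
  assumes nz: "\<forall>i. (lam::real^'n)$i \<noteq> 0" and Hb: "offb lam H' = 0"
  shows "hadamard (Omega lam) H' = blk (Pp lam) (Pp lam) H'"
  unfolding vec_eq_iff
proof (intro allI)
  fix i j
  have "H'$i$j = 0" if "(0 < lam$i) \<noteq> (0 < lam$j)"
    using Hb that by (metis offb_nth zero_index)
  then show "hadamard (Omega lam) H' $ i $ j = blk (Pp lam) (Pp lam) H' $ i $ j"
    using nz_cases[of lam i] nz_cases[of lam j] nz
    by (auto simp: Omega_def Pp_def)
qed



lemma cj_back: "Q ** D ** transpose Q = cj (transpose Q) D"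
  by (simp add: cj_def)

lemma diag_max_blk: "diag_mat (\<chi> i. max ((lam::real^'n)$i) 0) = blk (Pp lam) (Pp lam) (diag_mat lam)"
  by (auto simp: vec_eq_iff diag_mat_def Pp_def max_def)

lemma fp_alg:
  fixes pX pS pH pD x d a S h :: "'a::real_vector"
  assumes "pH - pD + (d - pD) = h"
  shows "(pX - s *\<^sub>R pS + pH) - 2 *\<^sub>R (pX + pD) + (x + d) + (pX + s *\<^sub>R (a + pS) - s *\<^sub>R (a + S)) = x - s *\<^sub>R S + h"
  using assms by (simp add: scaleR_2 algebra_simps)

lemma fixed_point:
  fixes A :: "'m::finite \<Rightarrow> real^'n^'n" and lam :: "real^'n"
  assumes As: "\<forall>i. A i \<in> sym_mats" and Asurj: "\<forall>v. \<exists>X \<in> sym_mats. opA A X = v"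
    and Q: "orthogonal_matrix Q" and nz: "\<forall>i. lam$i \<noteq> 0"
    and mu: "0 < \<mu>" "\<forall>i. \<mu> \<le> \<bar>lam$i\<bar>"
    and KKT: "is_KKT A b C Xs ys Ss"
    and eig: "Xs - \<sigma> *\<^sub>R Ss = Q ** diag_mat lam ** transpose Q"
    and Xs_eig: "Xs = Q ** diag_mat (\<chi> i. max (lam $ i) 0) ** transpose Q"
    and H: "H \<in> fix_sym (opM A Q lam)" and Hn: "norm H \<le> \<mu>"
  shows "proj_psd (Xs - \<sigma> *\<^sub>R Ss + H) = Xs + opD Q lam H"
    and "admm_step A b C \<sigma> (Xs - \<sigma> *\<^sub>R Ss + H) = Xs - \<sigma> *\<^sub>R Ss + H"
proof -
  have Qt: "orthogonal_matrix (transpose Q)" using Q by simp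
  define H' where "H' = cj Q H"
  have Hs: "transpose H = H" and fx: "opM A Q lam H = H" using H by (auto simp: fix_sym_def sym_mats_def)
  have H's: "transpose H' = H'" using Hs cj_sym_iff[OF Q] by (simp add: H'_def)
  have H'b: "offb lam H' = 0" unfolding H'_def by (rule fix_offb[OF As Asurj Q nz fx])
  have H'n: "norm H' \<le> \<mu>" using Hn cj_norm[OF Q] by (simp add: H'_def)
  have Hback: "H = cj (transpose Q) H'" by (simp add: H'_def cj_inv[OF Q])
  have W: "Xs - \<sigma> *\<^sub>R Ss + H = cj (transpose Q) (diag_mat lam + H')"
    by (simp add: eig cj_back cj_add Hback)
  have Xsb: "Xs = cj (transpose Q) (blk (Pp lam) (Pp lam) (diag_mat lam))"
    by (simp add: Xs_eig cj_back diag_max_blk)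
  have DH: "opD Q lam H = cj (transpose Q) (blk (Pp lam) (Pp lam) H')"
    by (simp add: opD_cj H'_def[symmetric] hadamard_offb_zero[OF nz H'b])
  show pr: "proj_psd (Xs - \<sigma> *\<^sub>R Ss + H) = Xs + opD Q lam H"
  proof -
    have "proj_psd (Xs - \<sigma> *\<^sub>R Ss + H) = cj (transpose Q) (blk (Pp lam) (Pp lam) (diag_mat lam + H'))"
      unfolding W by (rule proj_block[OF Q nz mu H's H'b H'n])
    also have "\<dots> = Xs + opD Q lam H" unfolding Xsb DH by (simp add: cj_add[symmetric] blk_add)
    finally show ?thesis .
  qed
  have pr0: "proj_psd (Xs - \<sigma> *\<^sub>R Ss) = Xs"
  proof -
    have W0: "Xs - \<sigma> *\<^sub>R Ss = cj (transpose Q) (diag_mat lam + 0)"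
      by (simp add: eig cj_back)
    have "transpose (0::real^'n^'n) = 0" by (simp add: transpose_def vec_eq_iff)
    moreover have "offb lam (0::real^'n^'n) = 0" by (simp add: vec_eq_iff)
    moreover have "norm (0::real^'n^'n) \<le> \<mu>" using mu by simp
    ultimately have "proj_psd (Xs - \<sigma> *\<^sub>R Ss) = cj (transpose Q) (blk (Pp lam) (Pp lam) (diag_mat lam + 0))"
      unfolding W0 by (intro proj_block[OF Q nz mu])
    then show ?thesis using Xsb by simp
  qed
  have Xb: "opA A Xs = b" and Cd: "C = opAadj A ys + Ss" using KKT by (auto simp: is_KKT_def)
  have Pb: "opAadj A (matrix_inv (gramA A) *v b) = projP A Xs" by (simp add: projP_def Xb)
  have PC: "projP A C = opAadj A ys + projP A Ss"
    by (simp add: Cd projP_add projP_adj[OF As Asurj])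
  show "admm_step A b C \<sigma> (Xs - \<sigma> *\<^sub>R Ss + H) = Xs - \<sigma> *\<^sub>R Ss + H"
  proof -
    have f: "projP A H - projP A (opD Q lam H) + (opD Q lam H - projP A (opD Q lam H)) = H"
      using fx by (simp add: opM_def projP_diff)
    have "admm_step A b C \<sigma> (Xs - \<sigma> *\<^sub>R Ss + H)
      = (projP A Xs - \<sigma> *\<^sub>R projP A Ss + projP A H) - 2 *\<^sub>R (projP A Xs + projP A (opD Q lam H))
        + (Xs + opD Q lam H) + (projP A Xs + \<sigma> *\<^sub>R (opAadj A ys + projP A Ss) - \<sigma> *\<^sub>R (opAadj A ys + Ss))"
      unfolding step_formula pr Pb PC by (simp add: projP_add projP_diff projP_scale Cd[symmetric])
    also have "\<dots> = Xs - \<sigma> *\<^sub>R Ss + H" by (rule fp_alg[OF f])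
    finally show ?thesis .
  qed
qed



lemma lin_alg:
  fixes PZ PW PpZ PpW PDE pz pw de c :: "'a::real_vector"
  shows "(PZ - 2 *\<^sub>R PpZ + pz + c) - (PW - 2 *\<^sub>R PpW + pw + c) - ((PZ - PW) - PDE + (de - PDE))
         = (pz - pw - de) - 2 *\<^sub>R (PpZ - PpW - PDE)"
  by (simp add: scaleR_2 algebra_simps)

lemma lin_bound:
  fixes A :: "'m::finite \<Rightarrow> real^'n^'n" and lam :: "real^'n"
  assumes As: "\<forall>i. A i \<in> sym_mats" and Asurj: "\<forall>v. \<exists>X \<in> sym_mats. opA A X = v"
    and Q: "orthogonal_matrix Q" and nz: "\<forall>i. lam$i \<noteq> 0"
    and mu: "0 < \<mu>" "\<forall>i. \<mu> \<le> \<bar>lam$i\<bar>"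
    and KKT: "is_KKT A b C Xs ys Ss"
    and eig: "Xs - \<sigma> *\<^sub>R Ss = Q ** diag_mat lam ** transpose Q"
    and H: "H \<in> fix_sym (opM A Q lam)"
    and Zs: "transpose Z = Z"
    and small: "norm H + norm (Z - (Xs - \<sigma> *\<^sub>R Ss + H)) \<le> \<mu>/2"
    and KP: "\<forall>X. norm (X - 2 *\<^sub>R projP A X) \<le> KP * norm X" and KP0: "0 \<le> KP"
  shows "norm (admm_step A b C \<sigma> Z - admm_step A b C \<sigma> (Xs - \<sigma> *\<^sub>R Ss + H)
            - opM A Q lam (Z - (Xs - \<sigma> *\<^sub>R Ss + H)))
         \<le> KP * (8/\<mu> * norm (Z - (Xs - \<sigma> *\<^sub>R Ss + H)) * (norm (Z - (Xs - \<sigma> *\<^sub>R Ss + H)) + norm H))"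
proof -
  define W where "W = Xs - \<sigma> *\<^sub>R Ss + H"
  define E where "E = Z - W"
  define R0 where "R0 = proj_psd Z - proj_psd W - opD Q lam E"
  have Qt: "orthogonal_matrix (transpose Q)" using Q by simp
  have id: "admm_step A b C \<sigma> Z - admm_step A b C \<sigma> W - opM A Q lam E = R0 - 2 *\<^sub>R projP A R0"
    unfolding step_formula opM_def R0_def E_def projP_diff
    by (rule lin_alg)
  have b1: "norm (R0 - 2 *\<^sub>R projP A R0) \<le> KP * norm R0" using KP by blast
  define H' where "H' = cj Q H"
  have Hs: "transpose H = H" and fx: "opM A Q lam H = H" using H by (auto simp: fix_sym_def sym_mats_def)
  have H's: "transpose H' = H'" using Hs cj_sym_iff[OF Q] by (simp add: H'_def)
  have H'b: "offb lam H' = 0" unfolding H'_def by (rule fix_offb[OF As Asurj Q nz fx])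
  have nH: "norm H' = norm H" using cj_norm[OF Q] by (simp add: H'_def)
  have nHmu: "norm H' \<le> \<mu>"
    using small mu(1) nH norm_ge_zero[of "Z - (Xs - \<sigma> *\<^sub>R Ss + H)"] by linarith
  have Hback: "H = cj (transpose Q) H'" by (simp add: H'_def cj_inv[OF Q])
  have Wc: "W = cj (transpose Q) (diag_mat lam + H')"
    by (simp add: W_def eig cj_back cj_add Hback)
  have cW: "cj Q W = diag_mat lam + H'" using Wc cj_inv2[OF Q] by simp
  have pW: "cj Q (proj_psd W) = blk (Pp lam) (Pp lam) (diag_mat lam + H')"
    using proj_block[OF Q nz mu H's H'b nHmu] Wc cj_inv2[OF Q] by simp
  have Xsy: "transpose Xs = Xs" and Ssy: "transpose Ss = Ss"
    using KKT by (auto simp: is_KKT_def psd_iff)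
  have Wsy: "transpose W = W" using Xsy Ssy Hs by (simp add: W_def transpose_def vec_eq_iff)
  have Esy: "transpose E = E" using Zs Wsy by (simp add: E_def transpose_def vec_eq_iff)
  define E' where "E' = cj Q E"
  have E's: "transpose E' = E'" using Esy cj_sym_iff[OF Q] by (simp add: E'_def)
  have nE: "norm E' = norm E" using cj_norm[OF Q] by (simp add: E'_def)
  define X where "X = cj Q (proj_psd Z)"
  define Y where "Y = cj Q (proj_psd Z - Z)"
  have Xp: "X \<in> psd_cone" unfolding X_def by (rule cj_psd[OF proj_char(1)[OF Zs]])
  have Yp: "Y \<in> psd_cone" unfolding Y_def by (rule cj_psd[OF proj_char(2)[OF Zs]])
  have XY: "X \<bullet> Y = 0" unfolding X_def Y_def cj_inner[OF Q] by (rule proj_char(3)[OF Zs])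
  have dec: "X - Y = diag_mat lam + H' + E'"
  proof -
    have "X - Y = cj Q Z" by (simp add: X_def Y_def cj_diff)
    also have "\<dots> = cj Q W + E'" by (simp add: E'_def E_def cj_diff)
    finally show ?thesis using cW by simp
  qed
  have lip: "norm (X - blk (Pp lam) (Pp lam) (diag_mat lam + H')) \<le> norm E'"
  proof -
    have "X - blk (Pp lam) (Pp lam) (diag_mat lam + H') = cj Q (proj_psd Z - proj_psd W)"
      by (simp add: X_def pW[symmetric] cj_diff)
    then have "norm (X - blk (Pp lam) (Pp lam) (diag_mat lam + H')) = norm (proj_psd Z - proj_psd W)"
      using cj_norm[OF Q] by simp
    also have "\<dots> \<le> norm (Z - W)" by (rule proj_lip)
    finally show ?thesis using nE by (simp add: E_def)
  qed
  have sm: "norm H' + norm E' \<le> \<mu>/2" using small nH nE by (simp add: E_def W_def)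
  have kb: "norm (X - blk (Pp lam) (Pp lam) (diag_mat lam + H') - hadamard (Omega lam) E')
          \<le> 8/\<mu> * norm E' * (norm E' + norm H')"
    by (rule key_bound[OF nz mu H's H'b E's Xp Yp XY dec lip sm])
  have cR: "cj Q R0 = X - blk (Pp lam) (Pp lam) (diag_mat lam + H') - hadamard (Omega lam) E'"
    by (simp add: R0_def cj_diff X_def pW[symmetric] opD_cj cj_inv2[OF Q] E'_def)
  have nR: "norm R0 \<le> 8/\<mu> * norm E * (norm E + norm H)"
    using kb cR cj_norm[OF Q, of R0] nE nH by simp
  have "norm (admm_step A b C \<sigma> Z - admm_step A b C \<sigma> W - opM A Q lam E) \<le> KP * norm R0"
    using id b1 by simp
  also have "\<dots> \<le> KP * (8/\<mu> * norm E * (norm E + norm H))"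
    using nR KP0 by (rule mult_left_mono)
  finally show ?thesis by (simp add: E_def W_def)
qed



lemma sym_add: "transpose (X::real^'n^'n) = X \<Longrightarrow> transpose Y = Y \<Longrightarrow> transpose (X + Y) = X + Y"
  by (simp add: sym_iff)
lemma sym_diff: "transpose (X::real^'n^'n) = X \<Longrightarrow> transpose Y = Y \<Longrightarrow> transpose (X - Y) = X - Y"
  by (simp add: sym_iff)
lemma sym_scale: "transpose (X::real^'n^'n) = X \<Longrightarrow> transpose (c *\<^sub>R X) = c *\<^sub>R X"
  by (simp add: sym_iff)

lemma step_sym:
  assumes As: "\<forall>i. A i \<in> sym_mats" and Cs: "C \<in> sym_mats" and Zs: "transpose Z = Z"
  shows "transpose (admm_step A b C \<sigma> Z) = admm_step A b C \<sigma> Z"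
proof -
  have p: "transpose (proj_psd Z) = proj_psd Z" using proj_char(1)[OF Zs] psd_iff by blast
  have c: "transpose C = C" using Cs by (simp add: sym_mats_def)
  show ?thesis unfolding step_formula
    by (intro sym_add sym_diff sym_scale projP_sym[OF As] opAadj_sym[OF As] p c)
qed

lemma hadamard_add: "hadamard M (X + Y) = hadamard M X + hadamard M Y"
  by (simp add: vec_eq_iff algebra_simps)
lemma hadamard_scale: "hadamard M (c *\<^sub>R X) = c *\<^sub>R hadamard M X"
  by (simp add: vec_eq_iff algebra_simps)

lemma opD_linear: "linear (opD Q l)"
  by (intro linearI) (simp_all add: opD_cj cj_add cj_scale hadamard_add hadamard_scale)

lemma opM_linear: "linear (opM A Q l)"
proof -
  have d: "linear (opD Q l)" by (rule opD_linear)
  have p: "linear (projP A)" by (rule projP_linear)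
  show ?thesis
    unfolding opM_def
    by (intro linear_compose_add linear_compose_sub linear_compose[unfolded o_def, OF _ p] d linear_ident)
qed

lemma transpose_linear: "linear (transpose :: real^'n^'n \<Rightarrow> real^'n^'n)"
  by (intro linearI) (simp_all add: transpose_def vec_eq_iff)

lemma lin_cont: "linear (f :: real^'n^'n \<Rightarrow> real^'n^'n) \<Longrightarrow> continuous_on UNIV f"
  by (simp add: linear_continuous_on linear_conv_bounded_linear)

lemma fix_closed: "linear L \<Longrightarrow> closed (fix_sym (L :: real^'n^'n \<Rightarrow> real^'n^'n))"
proof -
  assume L: "linear L"
  have e: "fix_sym L = {H. transpose H = H} \<inter> {H. L H = H}" by (auto simp: fix_sym_def sym_mats_def)
  show ?thesis unfolding e
    by (intro closed_Int closed_Collect_eq lin_cont[OF transpose_linear] lin_cont[OF L] continuous_on_id)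
qed

lemma fix_zero: "linear L \<Longrightarrow> (0::real^'n^'n) \<in> fix_sym L"
  by (simp add: fix_sym_def sym_mats_def linear_0 transpose_def vec_eq_iff)

lemma fix_add: "linear L \<Longrightarrow> X \<in> fix_sym L \<Longrightarrow> Y \<in> fix_sym L \<Longrightarrow> X + (Y::real^'n^'n) \<in> fix_sym L"
  by (simp add: fix_sym_def sym_mats_def linear_add sym_add)

lemma fix_scale: "linear L \<Longrightarrow> X \<in> fix_sym L \<Longrightarrow> c *\<^sub>R (X::real^'n^'n) \<in> fix_sym L"
  by (simp add: fix_sym_def sym_mats_def linear_scale sym_scale)

lemma fix_convex: "linear L \<Longrightarrow> convex (fix_sym (L :: real^'n^'n \<Rightarrow> real^'n^'n))"
  unfolding convex_def by (auto intro: fix_add fix_scale)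



lemma opnorm_bound:
  fixes L :: "real^'n^'n \<Rightarrow> real^'n^'n"
  assumes L: "linear L"
  defines "F \<equiv> fix_sym L"
  shows "sym_opnorm (\<lambda>H. L H - closest_point F H) \<ge> 0"
    and "\<And>d. transpose d = d \<Longrightarrow> norm (L d - closest_point F d) \<le> sym_opnorm (\<lambda>H. L H - closest_point F H) * norm d"
proof -
  have Fc: "closed F" "convex F" "F \<noteq> {}" "0 \<in> F"
    using fix_closed[OF L] fix_convex[OF L] fix_zero[OF L] by (auto simp: F_def)
  have P0: "closest_point F 0 = 0" using closest_point_self[OF Fc(4)] .
  have nP: "norm (closest_point F x) \<le> norm x" for x
    using closest_point_lipschitz[OF Fc(2,1,3), of x 0] P0 by (simp add: dist_norm)
  obtain K where K: "\<And>x. norm (L x) \<le> norm x * K" and K0: "K > 0"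
    using bounded_linear.pos_bounded[OF L[unfolded linear_conv_bounded_linear]] by blast
  let ?f = "\<lambda>H. norm (L H - closest_point F H) / norm H"
  let ?S = "{H \<in> sym_mats. H \<noteq> 0}"
  have bd: "?f H \<le> K + 1" for H
  proof (cases "H = 0")
    case True then show ?thesis
      using K0 by simp
  next
    case False
    have "norm (L H - closest_point F H) \<le> norm (L H) + norm (closest_point F H)" by (rule norm_triangle_ineq4)
    also have "\<dots> \<le> norm H * K + norm H" using K nP by (intro add_mono) auto
    finally have "norm (L H - closest_point F H) \<le> (K + 1) * norm H" by (simp add: algebra_simps)
    then show ?thesis using False by (simp add: divide_le_eq)
  qed
  have bda: "bdd_above (?f ` ?S)" by (rule bdd_aboveI2[where M="K+1"]) (use bd in auto)
  have ub: "?f H \<le> sym_opnorm (\<lambda>H. L H - closest_point F H)" if "H \<in> ?S" for H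
    unfolding sym_opnorm_def using bda that by (rule cSUP_upper2) simp_all
  have m1: "(mat 1 :: real^'n^'n) \<in> ?S"
    by (auto simp: sym_mats_def vec_eq_iff mat_def transpose_def)
  show "sym_opnorm (\<lambda>H. L H - closest_point F H) \<ge> 0"
    using ub[OF m1] by (meson divide_nonneg_nonneg norm_ge_zero order_trans)
  fix d :: "real^'n^'n" assume ds: "transpose d = d"
  show "norm (L d - closest_point F d) \<le> sym_opnorm (\<lambda>H. L H - closest_point F H) * norm d"
  proof (cases "d = 0")
    case True then show ?thesis by (simp add: linear_0[OF L] P0)
  next
    case False
    then have "d \<in> ?S" using ds by (simp add: sym_mats_def)
    then have "?f d \<le> sym_opnorm (\<lambda>H. L H - closest_point F H)" by (rule ub)
    then show ?thesis using False by (simp add: divide_le_eq)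
  qed
qed



theorem theorem4:
  fixes A :: "'m::finite \<Rightarrow> real^'n^'n" and b :: "real^'m" and C :: "real^'n^'n"
    and \<sigma> :: real and Z :: "nat \<Rightarrow> real^'n^'n"
    and Xs Ss :: "real^'n^'n" and ys :: "real^'m"
    and Q :: "real^'n^'n" and lam :: "real^'n"
  assumes A_sym: "\<forall>i. A i \<in> sym_mats"
    and C_sym: "C \<in> sym_mats"
    and A_surj: "\<forall>v. \<exists>X \<in> sym_mats. opA A X = v"
    and KKT_nonempty: "\<exists>X y S. is_KKT A b C X y S"
    and sigma_pos: "\<sigma> > 0"
    and Z0: "Z 0 \<in> sym_mats"
    and iter: "\<forall>k. Z (Suc k) = admm_step A b C \<sigma> (Z k)"
    and KKT: "is_KKT A b C Xs ys Ss"
    and strict_compl: "rank Xs + rank Ss = CARD('n)"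
    and conv: "Z \<longlonglongrightarrow> Xs - \<sigma> *\<^sub>R Ss"
    and Q_orth: "orthogonal_matrix Q"
    and eig: "Xs - \<sigma> *\<^sub>R Ss = Q ** diag_mat lam ** transpose Q"
    and lam_nz: "\<forall>i. lam $ i \<noteq> 0"
    and Xs_eig: "Xs = Q ** diag_mat (\<chi> i. max (lam $ i) 0) ** transpose Q"
  shows "\<forall>\<rho>0. sym_opnorm (\<lambda>H. opM A Q lam H - closest_point (fix_sym (opM A Q lam)) H) < \<rho>0
            \<and> \<rho>0 < 1 \<longrightarrow>
          (\<exists>kbar::nat. \<exists>\<alpha>>0. \<exists>\<rho>. 0 < \<rho> \<and> \<rho> < 1 \<and>
             (\<forall>k\<ge>kbar. infdist (Z k) {W \<in> sym_mats. admm_step A b C \<sigma> W = W} \<le> \<alpha> * \<rho> ^ k))"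
proof (intro allI impI)
  fix \<rho>0 :: real
  define L where "L = opM A Q lam"
  define F where "F = fix_sym L"
  define Pr where "Pr = closest_point F"
  define s where "s = sym_opnorm (\<lambda>H. L H - Pr H)"
  define Zs where "Zs = Xs - \<sigma> *\<^sub>R Ss"
  define FP where "FP = {W \<in> sym_mats. admm_step A b C \<sigma> W = W}"
  assume "sym_opnorm (\<lambda>H. opM A Q lam H - closest_point (fix_sym (opM A Q lam)) H) < \<rho>0 \<and> \<rho>0 < 1"
  then have s\<rho>: "s < \<rho>0" and \<rho>1: "\<rho>0 < 1" by (auto simp: s_def L_def F_def Pr_def)
  have Lin: "linear L" unfolding L_def by (rule opM_linear)
  have s0: "0 \<le> s" unfolding s_def Pr_def F_def by (rule opnorm_bound(1)[OF Lin])
  have sb: "\<And>d. transpose d = d \<Longrightarrow> norm (L d - Pr d) \<le> s * norm d"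
    unfolding s_def Pr_def F_def by (rule opnorm_bound(2)[OF Lin])
  have \<rho>0p: "0 < \<rho>0" using s0 s\<rho> by simp
  define \<epsilon> where "\<epsilon> = \<rho>0 - s"
  have \<epsilon>0: "0 < \<epsilon>" using s\<rho> by (simp add: \<epsilon>_def)
  have Fc: "closed F" "convex F" "F \<noteq> {}" "0 \<in> F"
    using fix_closed[OF Lin] fix_convex[OF Lin] fix_zero[OF Lin] by (auto simp: F_def)
  have P0: "Pr 0 = 0" unfolding Pr_def using closest_point_self[OF Fc(4)] .
  have PF: "Pr x \<in> F" for x unfolding Pr_def by (rule closest_point_in_set[OF Fc(1,3)])
  have nP: "norm (Pr x) \<le> norm x" for x
    using closest_point_lipschitz[OF Fc(2,1,3), of x 0] P0 by (simp add: Pr_def dist_norm)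
  have Pmin: "norm (x - Pr x) \<le> norm (x - G)" if "G \<in> F" for x G
    using closest_point_le[OF Fc(1) that, of x] by (simp add: Pr_def dist_norm)
  have Fsym: "transpose H = H" if "H \<in> F" for H using that by (simp add: F_def fix_sym_def sym_mats_def)
  have Fadd: "X + Y \<in> F" if "X \<in> F" "Y \<in> F" for X Y
    using that fix_add[OF Lin] by (simp add: F_def)
  have lin2: "linear (\<lambda>X::real^'n^'n. X - 2 *\<^sub>R projP A X)"
    by (intro linearI) (simp_all add: projP_add projP_scale algebra_simps)
  obtain KP where KP: "\<And>x. norm (x - 2 *\<^sub>R projP A x) \<le> norm x * KP" and KP0: "KP > 0"
    using bounded_linear.pos_bounded[OF lin2[unfolded linear_conv_bounded_linear]] by blast
  have KP': "\<forall>X. norm (X - 2 *\<^sub>R projP A X) \<le> KP * norm X" using KP by (simp add: mult.commute)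
  define \<mu> where "\<mu> = Min (range (\<lambda>i. \<bar>lam$i\<bar>))"
  have \<mu>le: "\<forall>i. \<mu> \<le> \<bar>lam$i\<bar>" by (simp add: \<mu>_def)
  have \<mu>0: "0 < \<mu>"
  proof -
    have "\<mu> \<in> range (\<lambda>i. \<bar>lam$i\<bar>)" unfolding \<mu>_def by (rule Min_in) auto
    then show ?thesis using lam_nz by auto
  qed
  define r where "r = min (\<mu>/6) (\<epsilon> * \<mu> / (24 * KP))"
  have r0: "0 < r" using \<mu>0 \<epsilon>0 KP0 by (simp add: r_def)
  obtain kbar where kb: "\<And>k. k \<ge> kbar \<Longrightarrow> norm (Z k - Zs) < r"
    using conv r0 unfolding LIMSEQ_iff Zs_def by blast
  have Zsym: "transpose (Z k) = Z k" for k
  proof (induction k)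
    case 0 then show ?case using Z0 by (simp add: sym_mats_def)
  next
    case (Suc k) then show ?case using iter step_sym[OF A_sym C_sym] by simp
  qed
  have Xsy: "transpose Xs = Xs" and Ssy: "transpose Ss = Ss"
    using KKT by (auto simp: is_KKT_def psd_iff)
  have Zssym: "transpose Zs = Zs" unfolding Zs_def by (intro sym_diff sym_scale Xsy Ssy)
  define e where "e k = Z k - Zs" for k
  define \<delta> where "\<delta> k = norm (e k - Pr (e k))" for k
  have W_fp: "Zs + Pr (e k) \<in> FP" "norm (Z k - (Zs + Pr (e k))) = \<delta> k" if "k \<ge> kbar" for k
  proof -
    have "norm (Pr (e k)) \<le> norm (e k)" by (rule nP)
    also have "\<dots> < r" using kb[OF that] by (simp add: e_def)
    finally have "norm (Pr (e k)) \<le> \<mu>" using r_def \<mu>0 by simp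
    then have fp: "admm_step A b C \<sigma> (Zs + Pr (e k)) = Zs + Pr (e k)"
      using fixed_point(2)[OF A_sym A_surj Q_orth lam_nz \<mu>0 \<mu>le KKT eig Xs_eig, of "Pr (e k)"] PF
      by (simp add: Zs_def F_def L_def)
    have "transpose (Zs + Pr (e k)) = Zs + Pr (e k)" by (intro sym_add Zssym Fsym PF)
    then show "Zs + Pr (e k) \<in> FP" using fp by (simp add: FP_def sym_mats_def)
    show "norm (Z k - (Zs + Pr (e k))) = \<delta> k" by (simp add: \<delta>_def e_def algebra_simps)
  qed
  have contr: "\<delta> (Suc k) \<le> \<rho>0 * \<delta> k" if k: "k \<ge> kbar" for k
  proof -
    define H where "H = Pr (e k)"
    define W where "W = Zs + H"
    define E where "E = Z k - W"
    have HF: "H \<in> F" by (simp add: H_def PF)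
    have nE: "norm E = \<delta> k" using W_fp(2)[OF k] by (simp add: E_def W_def H_def)
    have fpW: "admm_step A b C \<sigma> W = W" using W_fp(1)[OF k] by (simp add: FP_def W_def H_def)
    have nek: "norm (e k) < r" using kb[OF k] by (simp add: e_def)
    have nH: "norm H < r" using nP[of "e k"] nek by (simp add: H_def)
    have nE2: "norm E \<le> 2 * r"
    proof -
      have "E = e k - H" by (simp add: E_def W_def e_def)
      then have "norm E \<le> norm (e k) + norm H" by (simp add: norm_triangle_ineq4)
      then show ?thesis using nek nH by simp
    qed
    have small: "norm H + norm (Z k - (Xs - \<sigma> *\<^sub>R Ss + H)) \<le> \<mu>/2"
    proof -
      have "norm H + norm E \<le> 3 * r" using nH nE2 by simp
      also have "\<dots> \<le> \<mu>/2" using r_def by simp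
      finally show ?thesis by (simp add: E_def W_def Zs_def)
    qed
    have lb: "norm (admm_step A b C \<sigma> (Z k) - admm_step A b C \<sigma> W - L E)
        \<le> KP * (8/\<mu> * norm E * (norm E + norm H))"
      using lin_bound[OF A_sym A_surj Q_orth lam_nz \<mu>0 \<mu>le KKT eig _ Zsym small KP' less_imp_le[OF KP0]]
        HF by (simp add: F_def L_def E_def W_def Zs_def)
    have "KP * (8/\<mu> * norm E * (norm E + norm H)) \<le> \<epsilon> * norm E"
    proof -
      have "norm E + norm H \<le> 3 * r" using nH nE2 by simp
      then have "KP * (8/\<mu>) * (norm E + norm H) \<le> KP * (8/\<mu>) * (3 * r)"
        using KP0 \<mu>0 by (intro mult_left_mono) simp_all
      also have "\<dots> \<le> KP * (8/\<mu>) * (3 * (\<epsilon> * \<mu> / (24 * KP)))"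
        using KP0 \<mu>0 r_def by (intro mult_left_mono) simp_all
      also have "\<dots> = \<epsilon>" using KP0 \<mu>0 by (simp add: field_simps)
      finally have "KP * (8/\<mu>) * (norm E + norm H) \<le> \<epsilon>" .
      then have "KP * (8/\<mu>) * (norm E + norm H) * norm E \<le> \<epsilon> * norm E"
        by (intro mult_right_mono) simp_all
      then show ?thesis by (simp add: algebra_simps)
    qed
    with lb have lb2: "norm (admm_step A b C \<sigma> (Z k) - admm_step A b C \<sigma> W - L E) \<le> \<epsilon> * norm E"
      by linarith
    have Esym: "transpose E = E" unfolding E_def W_def
      by (intro sym_diff sym_add Zsym Zssym Fsym HF)
    have sE: "norm (L E - Pr E) \<le> s * norm E" by (rule sb[OF Esym])
    define G where "G = H + Pr E"
    have GF: "G \<in> F" unfolding G_def by (intro Fadd HF PF)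
    have "e (Suc k) - G = (admm_step A b C \<sigma> (Z k) - admm_step A b C \<sigma> W - L E) + (L E - Pr E)"
      using iter fpW by (simp add: e_def G_def W_def algebra_simps)
    then have "norm (e (Suc k) - G) \<le> \<epsilon> * norm E + s * norm E"
      using lb2 sE norm_triangle_ineq[of "admm_step A b C \<sigma> (Z k) - admm_step A b C \<sigma> W - L E" "L E - Pr E"]
      by simp
    also have "\<dots> = \<rho>0 * \<delta> k" using nE by (simp add: \<epsilon>_def algebra_simps)
    finally have "norm (e (Suc k) - G) \<le> \<rho>0 * \<delta> k" .
    moreover have "\<delta> (Suc k) \<le> norm (e (Suc k) - G)" unfolding \<delta>_def by (rule Pmin[OF GF])
    ultimately show ?thesis by simp
  qed
  have geo: "\<delta> (kbar + d) \<le> \<delta> kbar * \<rho>0 ^ d" for d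
  proof (induction d)
    case 0 then show ?case by simp
  next
    case (Suc d)
    have "\<delta> (kbar + Suc d) \<le> \<rho>0 * \<delta> (kbar + d)" using contr[of "kbar + d"] by simp
    also have "\<dots> \<le> \<rho>0 * (\<delta> kbar * \<rho>0 ^ d)" using Suc \<rho>0p by (simp add: mult_left_mono)
    finally show ?case by (simp add: algebra_simps)
  qed
  define \<alpha> where "\<alpha> = (\<delta> kbar + 1) / \<rho>0 ^ kbar"
  have \<delta>0: "0 \<le> \<delta> k" for k by (simp add: \<delta>_def)
  have \<alpha>0: "\<alpha> > 0" using \<rho>0p \<delta>0[of kbar] by (simp add: \<alpha>_def)
  show "\<exists>kbar::nat. \<exists>\<alpha>>0. \<exists>\<rho>. 0 < \<rho> \<and> \<rho> < 1 \<and>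
             (\<forall>k\<ge>kbar. infdist (Z k) {W \<in> sym_mats. admm_step A b C \<sigma> W = W} \<le> \<alpha> * \<rho> ^ k)"
  proof (intro exI conjI allI impI)
    show "0 < \<alpha>" by (rule \<alpha>0)
    show "0 < \<rho>0" by (rule \<rho>0p)
    show "\<rho>0 < 1" by (rule \<rho>1)
    fix k :: nat assume k: "kbar \<le> k"
    obtain d where d: "k = kbar + d" using k le_Suc_ex by blast
    have "infdist (Z k) FP \<le> dist (Z k) (Zs + Pr (e k))" by (rule infdist_le[OF W_fp(1)[OF k]])
    also have "\<dots> = \<delta> k" using W_fp(2)[OF k] by (simp add: dist_norm)
    also have "\<dots> \<le> \<delta> kbar * \<rho>0 ^ d" using geo d by simp
    also have "\<dots> \<le> (\<delta> kbar + 1) * \<rho>0 ^ d" using \<rho>0p by (simp add: mult_right_mono)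
    also have "\<dots> = \<alpha> * \<rho>0 ^ k" using \<rho>0p by (simp add: \<alpha>_def d power_add)
    finally show "infdist (Z k) {W \<in> sym_mats. admm_step A b C \<sigma> W = W} \<le> \<alpha> * \<rho>0 ^ k"
      by (simp add: FP_def)
  qed
qed


end
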